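(* (i) If $y\in\mathcal{SH}(r)$ satisfies $P_1(y)\ne0$ and $P_2(y)\ne0$, then $$\rho(G)y=\{y'\in\mathcal{SH}(r):\ P_1(y)P_1(y')>0\ \text{and}\ P_2(y)P_2(y')>0\}.$$ (ii) Consequently $(G,\rho,\mathcal{SH}(r))$ is a prehomogeneous vector space (it has an open $\rho(G)$-orbit) and its singular set, the complement of the union of the open orbits, is $\Sigma=\{y\in\mathcal{SH}(r):P_1(y)P_2(y)=0\}$.
   Context: Fix an integer $r\ge 2$. For $\ell=1,\dots,r+1$ let $Y_\ell\in\mathrm{Mat}(r,\mathbb R)$ have $(i,j)$-entry $\delta_{i+j,\ell+1}$. Let $\mathcal{SH}(r)=\mathrm{span}_{\mathbb R}(Y_1,\dots,Y_{r+1})$, the space of sub-Hankel matrices: $y=\sum_\ell y_\ell Y_\ell$ is the $r\times r$ matrix whose $(i,j)$-entry is $y_{i+j-1}$ if $i+j\le r+2$ and $0$ otherwise. For $k=0,\dots,r-1$ let $T_k$ be the $r\times r$ matrix with $(i,j)$-entry $(r-k-i+1)\delta_{j,i+k}$. Put $H_1=\frac1rT_0-\frac12I_r$, $H_2=I_r-\frac1rT_0=\mathrm{diag}(0,\frac1r,\dots,\frac{r-1}r)$. Let $\mathfrak g=\mathrm{span}(H_1,H_2,T_1,\dots,T_{r-1})$ (a solvable Lie algebra of upper triangular matrices) and $G\subset GL(r,\mathbb R)$ the connected Lie subgroup with Lie algebra $\mathfrak g$. Define $\rho(g)y=g\,y\,{}^tg$ for $g\in G$, $y\in\mathcal{SH}(r)$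 (this preserves $\mathcal{SH}(r)$). Let $P_1(y)=\det y$ and $P_2(y)=y_{r+1}$. *)

theory Defs
  imports "Jordan_Normal_Form.Determinant"
begin

(* All matrices are r x r real matrices of Jordan_Normal_Form, with 0-based indices:
   paper entry (i,j) (1-based) is  A $$ (i-1, j-1). *)

(* Sub-Hankel matrix with coordinates y_1,...,y_{r+1}: 1-based (i,j)-entry y_{i+j-1}
   if i+j <= r+2, else 0.  0-based: entry c (i+j+1) if i+j <= r. *)
definition sh :: "nat \<Rightarrow> (nat \<Rightarrow> real) \<Rightarrow> real mat" where
  "sh r c = mat r r (\<lambda>(i,j). if i + j \<le> r then c (i + j + 1) else 0)"

definition SH :: "nat \<Rightarrow> real mat set" where
  "SH r = {sh r c | c. True}"

(* P_1(y) = det y ;  P_2(y) = y_{r+1}, which is the 1-based (2,r) entry of y *)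
definition P1 :: "real mat \<Rightarrow> real" where
  "P1 y = det y"

definition P2 :: "nat \<Rightarrow> real mat \<Rightarrow> real" where
  "P2 r y = y $$ (1, r - 1)"

(* T_k: 1-based (i,j)-entry (r-k-i+1) delta_{j,i+k}; 0-based (r-k-i) delta_{j,i+k} *)
definition Tm :: "nat \<Rightarrow> nat \<Rightarrow> real mat" where
  "Tm r k = mat r r (\<lambda>(i,j). if j = i + k then real r - real k - real i else 0)"

definition H1 :: "nat \<Rightarrow> real mat" where
  "H1 r = mat r r (\<lambda>(i,j). (1 / real r) * Tm r 0 $$ (i,j) - (1/2) * (1\<^sub>m r) $$ (i,j))"

definition H2 :: "nat \<Rightarrow> real mat" where
  "H2 r = mat r r (\<lambda>(i,j). (1\<^sub>m r) $$ (i,j) - (1 / real r) * Tm r 0 $$ (i,j))"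

definition gLie :: "nat \<Rightarrow> real mat set" where
  "gLie r = {mat r r (\<lambda>(i,j). a * H1 r $$ (i,j) + b * H2 r $$ (i,j)
                     + (\<Sum>k\<in>{1..<r}. c k * Tm r k $$ (i,j))) | a b c. True}"

definition mexp :: "real mat \<Rightarrow> real mat" where
  "mexp A = mat (dim_row A) (dim_col A) (\<lambda>(i,j). \<Sum>n. (A ^\<^sub>m n) $$ (i,j) / fact n)"

(* the connected Lie subgroup G with Lie algebra g: the subgroup of GL(r,R)
   generated by exp(g), i.e. all finite products exp(X_1)...exp(X_k), X_i in g *)
inductive_set Ggrp :: "nat \<Rightarrow> real mat set" for r where
  one: "1\<^sub>m r \<in> Ggrp r"
| step: "X \<in> gLie r \<Longrightarrow> A \<in> Ggrp r \<Longrightarrow> mexp X * A \<in> Ggrp r"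

definition rho :: "real mat \<Rightarrow> real mat \<Rightarrow> real mat" where
  "rho g y = g * y * transpose_mat g"

definition orbit :: "nat \<Rightarrow> real mat \<Rightarrow> real mat set" where
  "orbit r y = (\<lambda>g. rho g y) ` Ggrp r"

(* openness of a subset of SH(r) (a finite-dim real vector space, topologized by the
   entrywise max-norm, equivalent to the Euclidean topology) *)
definition open_SH :: "nat \<Rightarrow> real mat set \<Rightarrow> bool" where
  "open_SH r U \<longleftrightarrow> U \<subseteq> SH r \<and>
     (\<forall>y\<in>U. \<exists>e>0. \<forall>y'\<in>SH r.
        (\<forall>i<r. \<forall>j<r. \<bar>y' $$ (i,j) - y $$ (i,j)\<bar> < e) \<longrightarrow> y' \<in> U)"

end

theory Submission
  imports Defs "Jordan_Normal_Form.Char_Poly"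
begin


lemma mult_entry:
  assumes "A \<in> carrier_mat r r" "B \<in> carrier_mat r r" "i < r" "j < r"
  shows "(A * B) $$ (i,j) = (\<Sum>c<r. A $$ (i,c) * B $$ (c,j))"
  using assms by (auto simp: scalar_prod_def lessThan_atLeast0 intro!: sum.cong)

lemma mult3_entry:
  fixes A y B :: "real mat"
  assumes "A \<in> carrier_mat r r" "y \<in> carrier_mat r r" "B \<in> carrier_mat r r" "i < r" "j < r"
  shows "(A * y * B) $$ (i,j) = (\<Sum>a<r. \<Sum>b<r. A $$ (i,a) * y $$ (a,b) * B $$ (b,j))"
proof -
  have "(A * y * B) $$ (i,j) = (\<Sum>b<r. (A*y) $$ (i,b) * B $$ (b,j))"
    using assms by (intro mult_entry) auto
  also have "\<dots> = (\<Sum>b<r. (\<Sum>a<r. A $$ (i,a) * y $$ (a,b)) * B $$ (b,j))"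
  proof (intro sum.cong refl)
    fix b assume "b \<in> {..<r}"
    then have "(A*y) $$ (i,b) = (\<Sum>a<r. A $$ (i,a) * y $$ (a,b))"
      using assms by (intro mult_entry) auto
    then show "(A*y) $$ (i,b) * B $$ (b,j) = (\<Sum>a<r. A $$ (i,a) * y $$ (a,b)) * B $$ (b,j)" by simp
  qed
  also have "\<dots> = (\<Sum>b<r. \<Sum>a<r. A $$ (i,a) * y $$ (a,b) * B $$ (b,j))"
    by (simp add: sum_distrib_right)
  also have "\<dots> = (\<Sum>a<r. \<Sum>b<r. A $$ (i,a) * y $$ (a,b) * B $$ (b,j))"
    by (rule sum.swap)
  finally show ?thesis .
qed

lemma pow_Suc_left:
  fixes A :: "real mat"
  assumes "A \<in> carrier_mat r r"
  shows "A ^\<^sub>m Suc k = A * A ^\<^sub>m k"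
proof (induction k)
  case 0 then show ?case using assms by (simp add: left_mult_one_mat right_mult_one_mat)
next
  case (Suc k)
  have "A ^\<^sub>m Suc (Suc k) = (A * A ^\<^sub>m k) * A" using Suc by simp
  also have "\<dots> = A * (A ^\<^sub>m k * A)" using assms by (intro assoc_mult_mat) auto
  finally show ?case by simp
qed

lemma pow_add_mat:
  fixes A :: "real mat"
  assumes "A \<in> carrier_mat r r"
  shows "A ^\<^sub>m (m + n) = A ^\<^sub>m m * A ^\<^sub>m n"
proof (induction n)
  case 0 then show ?case using assms by (simp add: right_mult_one_mat)
next
  case (Suc n)
  have "A ^\<^sub>m (m + Suc n) = (A ^\<^sub>m m * A ^\<^sub>m n) * A" using Suc by simp
  also have "\<dots> = A ^\<^sub>m m * (A ^\<^sub>m n * A)" using assms by (intro assoc_mult_mat) auto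
  finally show ?case by simp
qed

lemma transpose_pow:
  fixes A :: "real mat"
  assumes "A \<in> carrier_mat r r"
  shows "transpose_mat (A ^\<^sub>m k) = (transpose_mat A) ^\<^sub>m k"
proof (induction k)
  case 0 then show ?case using assms by simp
next
  case (Suc k)
  have "transpose_mat (A ^\<^sub>m Suc k) = transpose_mat A * transpose_mat (A ^\<^sub>m k)"
    using assms by (simp add: transpose_mult[of _ r r _ r])
  also have "\<dots> = transpose_mat A * transpose_mat A ^\<^sub>m k" using Suc by simp
  also have "\<dots> = transpose_mat A ^\<^sub>m Suc k"
    by (rule pow_Suc_left[symmetric]) (use assms in simp)
  finally show ?case .
qed

lemma smult_pow:
  fixes A :: "real mat"
  assumes "A \<in> carrier_mat r r"
  shows "(c \<cdot>\<^sub>m A) ^\<^sub>m k = (c ^ k) \<cdot>\<^sub>m (A ^\<^sub>m k)"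
proof (induction k)
  case 0 then show ?case using assms by (auto intro!: eq_matI)
next
  case (Suc k)
  have "(c \<cdot>\<^sub>m A) ^\<^sub>m Suc k = ((c ^ k) \<cdot>\<^sub>m (A ^\<^sub>m k)) * (c \<cdot>\<^sub>m A)" using Suc by simp
  also have "\<dots> = (c ^ k) \<cdot>\<^sub>m (A ^\<^sub>m k * (c \<cdot>\<^sub>m A))"
    using assms by (intro mult_smult_assoc_mat) auto
  also have "A ^\<^sub>m k * (c \<cdot>\<^sub>m A) = c \<cdot>\<^sub>m (A ^\<^sub>m Suc k)"
    using assms by (simp add: mult_smult_distrib[of _ r r _ r])
  finally show ?case using assms by (auto intro!: eq_matI)
qed

definition mnorm :: "nat \<Rightarrow> real mat \<Rightarrow> real" where
  "mnorm r A = (\<Sum>a<r. \<Sum>b<r. \<bar>A $$ (a,b)\<bar>)"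

lemma pow_entry_bound:
  fixes A :: "real mat"
  assumes "A \<in> carrier_mat r r" "i < r" "j < r"
  shows "\<bar>(A ^\<^sub>m k) $$ (i,j)\<bar> \<le> mnorm r A ^ k"
  using assms(2,3)
proof (induction k arbitrary: i j)
  case 0 then show ?case using assms by simp
next
  case (Suc k)
  have col: "(\<Sum>c<r. \<bar>A $$ (c,j)\<bar>) \<le> mnorm r A"
  proof -
    have "(\<Sum>c<r. \<bar>A $$ (c,j)\<bar>) \<le> (\<Sum>c<r. \<Sum>b<r. \<bar>A $$ (c,b)\<bar>)"
      by (intro sum_mono member_le_sum) (use Suc in auto)
    then show ?thesis by (simp add: mnorm_def)
  qed
  have nn: "0 \<le> mnorm r A" unfolding mnorm_def by (intro sum_nonneg) auto
  have "\<bar>(A ^\<^sub>m Suc k) $$ (i,j)\<bar> = \<bar>\<Sum>c<r. (A ^\<^sub>m k) $$ (i,c) * A $$ (c,j)\<bar>"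
    using assms Suc by (simp add: mult_entry[of _ r] del: index_mult_mat)
  also have "\<dots> \<le> (\<Sum>c<r. \<bar>(A ^\<^sub>m k) $$ (i,c)\<bar> * \<bar>A $$ (c,j)\<bar>)"
    by (rule order_trans[OF sum_abs]) (simp add: abs_mult)
  also have "\<dots> \<le> (\<Sum>c<r. mnorm r A ^ k * \<bar>A $$ (c,j)\<bar>)"
    by (intro sum_mono mult_right_mono Suc.IH) (use Suc in auto)
  also have "\<dots> = mnorm r A ^ k * (\<Sum>c<r. \<bar>A $$ (c,j)\<bar>)" by (simp add: sum_distrib_left)
  also have "\<dots> \<le> mnorm r A ^ k * mnorm r A" by (intro mult_left_mono col) (use nn in auto)
  finally show ?case by (simp add: mult.commute)
qed

lemma summable_pow_entry:
  fixes A :: "real mat"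
  assumes "A \<in> carrier_mat r r" "i < r" "j < r"
  shows "summable (\<lambda>k. norm ((A ^\<^sub>m k) $$ (i,j) / fact k))"
proof (rule summable_comparison_test[OF _ summable_exp[of "mnorm r A"]])
  show "\<exists>N. \<forall>n\<ge>N. norm (norm ((A ^\<^sub>m n) $$ (i,j) / fact n)) \<le> inverse (fact n) * mnorm r A ^ n"
  proof (intro exI allI impI)
    fix n :: nat
    have "\<bar>(A ^\<^sub>m n) $$ (i,j)\<bar> / fact n \<le> mnorm r A ^ n / fact n"
      by (intro divide_right_mono pow_entry_bound[OF assms]) auto
    then show "norm (norm ((A ^\<^sub>m n) $$ (i,j) / fact n)) \<le> inverse (fact n) * mnorm r A ^ n"
      by (simp add: divide_inverse mult.commute abs_mult)
  qed
qed

lemma mexp_entry: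
  fixes A :: "real mat"
  assumes "A \<in> carrier_mat r r" "i < r" "j < r"
  shows "mexp A $$ (i,j) = (\<Sum>k. (A ^\<^sub>m k) $$ (i,j) / fact k)"
  using assms by (simp add: mexp_def)

lemma mexp_carrier[simp]: "(A::real mat) \<in> carrier_mat r r \<Longrightarrow> mexp A \<in> carrier_mat r r"
  unfolding mexp_def carrier_mat_def by simp

lemma mexp_sums:
  fixes A :: "real mat"
  assumes "A \<in> carrier_mat r r" "i < r" "j < r"
  shows "(\<lambda>k. (A ^\<^sub>m k) $$ (i,j) / fact k) sums (mexp A $$ (i,j))"
  using summable_norm_cancel[OF summable_pow_entry[OF assms]] mexp_entry[OF assms]
  by (simp add: summable_sums)

lemma mexp_transpose:
  fixes A :: "real mat"
  assumes "A \<in> carrier_mat r r"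
  shows "transpose_mat (mexp A) = mexp (transpose_mat A)"
proof (rule eq_matI)
  fix i j assume "i < dim_row (mexp (transpose_mat A))" "j < dim_col (mexp (transpose_mat A))"
  then have ij: "i < r" "j < r" using assms by (auto simp: mexp_def)
  have "transpose_mat (mexp A) $$ (i,j) = mexp A $$ (j,i)" using ij assms by (simp add: mexp_def)
  also have "\<dots> = (\<Sum>k. (A ^\<^sub>m k) $$ (j,i) / fact k)" using ij assms by (simp add: mexp_entry)
  also have "\<dots> = (\<Sum>k. (transpose_mat A ^\<^sub>m k) $$ (i,j) / fact k)"
    by (subst transpose_pow[OF assms, symmetric]) (use ij assms in simp)
  also have "\<dots> = mexp (transpose_mat A) $$ (i,j)"
    using ij assms by (simp add: mexp_entry)
  finally show "transpose_mat (mexp A) $$ (i,j) = mexp (transpose_mat A) $$ (i,j)" .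
qed (use assms in \<open>auto simp: mexp_def\<close>)



lemma mexp_prod:
  fixes A y B :: "real mat"
  assumes A: "A \<in> carrier_mat r r" and y: "y \<in> carrier_mat r r" and B: "B \<in> carrier_mat r r"
    and ij: "i < r" "j < r"
  shows "(\<lambda>N. \<Sum>m\<le>N. (A ^\<^sub>m m * y * B ^\<^sub>m (N-m)) $$ (i,j) / (fact m * fact (N-m)))
          sums ((mexp A * y * mexp B) $$ (i,j))"
proof -
  define P where "P = (\<lambda>m a. (A ^\<^sub>m m) $$ (i,a) / fact m)"
  define Q where "Q = (\<lambda>m b. (B ^\<^sub>m m) $$ (b,j) / fact m)"
  have cp: "(\<lambda>N. \<Sum>m\<le>N. P m a * Q (N-m) b) sums (mexp A $$ (i,a) * mexp B $$ (b,j))"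
    if "a < r" "b < r" for a b
  proof -
    have "(\<lambda>N. \<Sum>m\<le>N. P m a * Q (N-m) b) sums ((\<Sum>m. P m a) * (\<Sum>m. Q m b))"
      unfolding P_def Q_def
      by (rule Cauchy_product_sums) (use summable_pow_entry A B ij that in auto)
    then show ?thesis unfolding P_def Q_def using mexp_entry A B ij that by simp
  qed
  have s1: "(\<lambda>N. \<Sum>a<r. \<Sum>b<r. y $$ (a,b) * (\<Sum>m\<le>N. P m a * Q (N-m) b))
      sums (\<Sum>a<r. \<Sum>b<r. y $$ (a,b) * (mexp A $$ (i,a) * mexp B $$ (b,j)))"
    by (intro sums_sum sums_mult cp) auto
  have eqv: "(\<Sum>a<r. \<Sum>b<r. y $$ (a,b) * (mexp A $$ (i,a) * mexp B $$ (b,j)))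
      = (mexp A * y * mexp B) $$ (i,j)"
    using A y B ij by (simp add: mult3_entry[of _ r] mult_ac del: index_mult_mat)
  have eqs: "(\<Sum>a<r. \<Sum>b<r. y $$ (a,b) * (\<Sum>m\<le>N. P m a * Q (N-m) b))
      = (\<Sum>m\<le>N. (A ^\<^sub>m m * y * B ^\<^sub>m (N-m)) $$ (i,j) / (fact m * fact (N-m)))" for N
  proof -
    have "(\<Sum>a<r. \<Sum>b<r. y $$ (a,b) * (\<Sum>m\<le>N. P m a * Q (N-m) b))
       = (\<Sum>a<r. \<Sum>b<r. \<Sum>m\<le>N. y $$ (a,b) * (P m a * Q (N-m) b))"
      by (simp add: sum_distrib_left)
    also have "\<dots> = (\<Sum>a<r. \<Sum>m\<le>N. \<Sum>b<r. y $$ (a,b) * (P m a * Q (N-m) b))"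
      by (intro sum.cong refl sum.swap)
    also have "\<dots> = (\<Sum>m\<le>N. \<Sum>a<r. \<Sum>b<r. y $$ (a,b) * (P m a * Q (N-m) b))"
      by (rule sum.swap)
    also have "\<dots> = (\<Sum>m\<le>N. (A ^\<^sub>m m * y * B ^\<^sub>m (N-m)) $$ (i,j) / (fact m * fact (N-m)))"
    proof (intro sum.cong refl)
      fix m assume "m \<in> {..N}"
      have "(A ^\<^sub>m m * y * B ^\<^sub>m (N-m)) $$ (i,j)
          = (\<Sum>a<r. \<Sum>b<r. (A ^\<^sub>m m) $$ (i,a) * y $$ (a,b) * (B ^\<^sub>m (N-m)) $$ (b,j))"
        using A y B ij by (intro mult3_entry) auto
      then show "(\<Sum>a<r. \<Sum>b<r. y $$ (a,b) * (P m a * Q (N-m) b))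
          = (A ^\<^sub>m m * y * B ^\<^sub>m (N-m)) $$ (i,j) / (fact m * fact (N-m))"
        by (simp add: P_def Q_def sum_divide_distrib mult_ac)
    qed
    finally show ?thesis .
  qed
  show ?thesis using s1 unfolding eqv eqs .
qed



lemma mexp_inv:
  fixes X :: "real mat"
  assumes X: "X \<in> carrier_mat r r"
  shows "mexp ((-1) \<cdot>\<^sub>m X) * mexp X = 1\<^sub>m r"
proof (rule eq_matI)
  fix i j assume "i < dim_row (1\<^sub>m r)" "j < dim_col (1\<^sub>m r)"
  then have ij: "i < r" "j < r" by auto
  have mX: "(-1) \<cdot>\<^sub>m X \<in> carrier_mat r r" using X by simp
  have s: "(\<lambda>N. \<Sum>m\<le>N. (((-1) \<cdot>\<^sub>m X) ^\<^sub>m m * 1\<^sub>m r * X ^\<^sub>m (N-m)) $$ (i,j) / (fact m * fact (N-m)))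
          sums ((mexp ((-1) \<cdot>\<^sub>m X) * 1\<^sub>m r * mexp X) $$ (i,j))"
    by (rule mexp_prod[OF mX _ X ij]) simp
  have trm: "(\<Sum>m\<le>N. (((-1) \<cdot>\<^sub>m X) ^\<^sub>m m * 1\<^sub>m r * X ^\<^sub>m (N-m)) $$ (i,j) / (fact m * fact (N-m)))
      = (if N = 0 then (1\<^sub>m r) $$ (i,j) else 0)" for N
  proof -
    have mat: "((-1) \<cdot>\<^sub>m X) ^\<^sub>m m * 1\<^sub>m r * X ^\<^sub>m (N-m) = ((-1)^m) \<cdot>\<^sub>m X ^\<^sub>m N" if "m \<le> N" for m
    proof -
      have "((-1) \<cdot>\<^sub>m X) ^\<^sub>m m * 1\<^sub>m r * X ^\<^sub>m (N-m) = (((-1)^m) \<cdot>\<^sub>m X ^\<^sub>m m) * X ^\<^sub>m (N-m)"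
        using X by (simp add: smult_pow[OF X] right_mult_one_mat[of _ r r])
      also have "\<dots> = ((-1)^m) \<cdot>\<^sub>m (X ^\<^sub>m m * X ^\<^sub>m (N-m))"
        using X by (intro mult_smult_assoc_mat) auto
      also have "X ^\<^sub>m m * X ^\<^sub>m (N-m) = X ^\<^sub>m N"
        using pow_add_mat[OF X, of m "N-m"] that by simp
      finally show ?thesis .
    qed
    have "(\<Sum>m\<le>N. (((-1) \<cdot>\<^sub>m X) ^\<^sub>m m * 1\<^sub>m r * X ^\<^sub>m (N-m)) $$ (i,j) / (fact m * fact (N-m)))
        = (\<Sum>m\<le>N. (X ^\<^sub>m N) $$ (i,j) / fact N * (of_nat (N choose m) * (-1)^m * 1^(N-m)))"
    proof (intro sum.cong refl)
      fix m assume m: "m \<in> {..N}"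
      have "(((-1) \<cdot>\<^sub>m X) ^\<^sub>m m * 1\<^sub>m r * X ^\<^sub>m (N-m)) $$ (i,j) = (-1)^m * (X ^\<^sub>m N) $$ (i,j)"
        using mat[of m] m X ij by simp
      moreover have "(of_nat (N choose m) :: real) = fact N / (fact m * fact (N - m))"
        using m by (intro binomial_fact) auto
      ultimately show "(((-1) \<cdot>\<^sub>m X) ^\<^sub>m m * 1\<^sub>m r * X ^\<^sub>m (N-m)) $$ (i,j) / (fact m * fact (N-m))
          = (X ^\<^sub>m N) $$ (i,j) / fact N * (of_nat (N choose m) * (-1)^m * 1^(N-m))"
        by (simp add: field_simps)
    qed
    also have "\<dots> = (X ^\<^sub>m N) $$ (i,j) / fact N * ((-1) + 1 :: real)^N"
    proof -
      have "(\<Sum>m\<le>N. of_nat (N choose m) * (-1)^m * (1::real)^(N-m)) = ((-1) + 1 :: real)^N"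
        by (rule binomial_ring[symmetric])
      then have "(\<Sum>m\<le>N. real (N choose m) * (-1)^m) = 0^N" by simp
      then show ?thesis
        by (simp add: sum_divide_distrib[symmetric] sum_distrib_left[symmetric])
    qed
    also have "\<dots> = (if N = 0 then (1\<^sub>m r) $$ (i,j) else 0)"
      using X ij by simp
    finally show ?thesis .
  qed
  have "(\<lambda>N. if N = 0 then (1\<^sub>m r) $$ (i,j) else 0) sums ((1\<^sub>m r :: real mat) $$ (i,j))"
    using sums_single[of 0 "\<lambda>_. (1\<^sub>m r :: real mat) $$ (i,j)"] by simp
  moreover have "(\<lambda>N. if N = 0 then (1\<^sub>m r) $$ (i,j) else 0) sums ((mexp ((-1) \<cdot>\<^sub>m X) * mexp X) $$ (i,j))"
    using s unfolding trm using X by (simp add: right_mult_one_mat[of _ r r])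
  ultimately show "(mexp ((-1) \<cdot>\<^sub>m X) * mexp X) $$ (i,j) = 1\<^sub>m r $$ (i,j)"
    using sums_unique2 by blast
qed (use X in \<open>auto simp: mexp_def\<close>)



lemma comb_rec:
  fixes f :: "nat \<Rightarrow> nat \<Rightarrow> real"
  shows "real (Suc N) * (\<Sum>m\<le>Suc N. f m (Suc N - m) / (fact m * fact (Suc N - m)))
       = (\<Sum>m\<le>N. f (Suc m) (N-m) / (fact m * fact (N-m)))
       + (\<Sum>m\<le>N. f m (Suc N - m) / (fact m * fact (N-m)))"
proof -
  define g where "g m = f m (Suc N - m) / (fact m * fact (Suc N - m))" for m
  have "real (Suc N) * (\<Sum>m\<le>Suc N. g m) = (\<Sum>m\<le>Suc N. real m * g m + real (Suc N - m) * g m)"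
    by (simp add: sum_distrib_left algebra_simps of_nat_diff flip: sum.distrib)
  also have "\<dots> = (\<Sum>m\<le>Suc N. real m * g m) + (\<Sum>m\<le>Suc N. real (Suc N - m) * g m)"
    by (rule sum.distrib)
  also have "(\<Sum>m\<le>Suc N. real m * g m) = (\<Sum>m\<le>N. real (Suc m) * g (Suc m))"
    by (subst sum.atMost_Suc_shift) simp
  also have "\<dots> = (\<Sum>m\<le>N. f (Suc m) (N-m) / (fact m * fact (N-m)))"
  proof (intro sum.cong refl)
    fix m
    have fs: "fact (Suc m) = (real (Suc m)) * (fact m :: real)" by (rule fact_Suc)
    have nz: "real (Suc m) \<noteq> 0" "(fact m :: real) \<noteq> 0" "(fact (N-m) :: real) \<noteq> 0" by auto
    show "real (Suc m) * g (Suc m) = f (Suc m) (N-m) / (fact m * fact (N-m))"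
    proof -
      have "real (Suc m) * g (Suc m) = (real (Suc m) * f (Suc m) (N-m)) / (real (Suc m) * (fact m * fact (N-m)))"
        unfolding g_def fs by (simp add: mult.assoc)
      also have "\<dots> = f (Suc m) (N-m) / (fact m * fact (N-m))"
        using nz(1) by (rule nonzero_mult_divide_mult_cancel_left)
      finally show ?thesis .
    qed
  qed
  also have "(\<Sum>m\<le>Suc N. real (Suc N - m) * g m) = (\<Sum>m\<le>N. real (Suc N - m) * g m)"
    by (subst sum.atMost_Suc) simp
  also have "\<dots> = (\<Sum>m\<le>N. f m (Suc N - m) / (fact m * fact (N-m)))"
  proof (intro sum.cong refl)
    fix m assume "m \<in> {..N}"
    then have e: "Suc N - m = Suc (N - m)" by auto
    have fs: "fact (Suc (N-m)) = (real (Suc (N-m))) * (fact (N-m) :: real)" by (rule fact_Suc)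
    have nz: "real (Suc (N-m)) \<noteq> 0" by auto
    have "real (Suc N - m) * g m = (real (Suc (N-m)) * f m (Suc N - m)) / (real (Suc (N-m)) * (fact m * fact (N-m)))"
      unfolding g_def e fs by (simp add: mult_ac)
    also have "\<dots> = f m (Suc N - m) / (fact m * fact (N-m))"
      using nz by (rule nonzero_mult_divide_mult_cancel_left)
    finally show "real (Suc N - m) * g m = f m (Suc N - m) / (fact m * fact (N-m))" .
  qed
  finally show ?thesis by (simp add: g_def)
qed

definition Wt :: "real mat \<Rightarrow> real mat \<Rightarrow> nat \<Rightarrow> nat \<Rightarrow> real mat" where
  "Wt X y m n = X ^\<^sub>m m * y * (transpose_mat X) ^\<^sub>m n"

definition Zs :: "real mat \<Rightarrow> real mat \<Rightarrow> nat \<Rightarrow> nat \<Rightarrow> nat \<Rightarrow> real" where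
  "Zs X y N i j = (\<Sum>m\<le>N. (Wt X y m (N-m)) $$ (i,j) / (fact m * fact (N-m)))"

lemma Wt_carrier: "X \<in> carrier_mat r r \<Longrightarrow> y \<in> carrier_mat r r \<Longrightarrow> Wt X y m n \<in> carrier_mat r r"
  unfolding Wt_def by auto

lemma W_left:
  assumes X: "X \<in> carrier_mat r r" and y: "y \<in> carrier_mat r r" and ij: "i < r" "j < r"
  shows "(\<Sum>c<r. X $$ (i,c) * (Wt X y m n) $$ (c,j)) = (Wt X y (Suc m) n) $$ (i,j)"
proof -
  have "(\<Sum>c<r. X $$ (i,c) * (Wt X y m n) $$ (c,j)) = (X * Wt X y m n) $$ (i,j)"
    using X y ij Wt_carrier[OF X y] by (intro mult_entry[symmetric]) auto
  also have "X * Wt X y m n = Wt X y (Suc m) n"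
  proof -
    have "X * Wt X y m n = X * ((X ^\<^sub>m m * y) * transpose_mat X ^\<^sub>m n)" by (simp add: Wt_def)
    also have "\<dots> = (X * (X ^\<^sub>m m * y)) * transpose_mat X ^\<^sub>m n"
      using X y by (intro assoc_mult_mat[symmetric]) auto
    also have "X * (X ^\<^sub>m m * y) = (X * X ^\<^sub>m m) * y"
      using X y by (intro assoc_mult_mat[symmetric]) auto
    also have "X * X ^\<^sub>m m = X ^\<^sub>m Suc m" by (rule pow_Suc_left[OF X, symmetric])
    finally show ?thesis by (simp add: Wt_def)
  qed
  finally show ?thesis .
qed

lemma W_right:
  assumes X: "X \<in> carrier_mat r r" and y: "y \<in> carrier_mat r r" and ij: "i < r" "j < r"
  shows "(\<Sum>c<r. (Wt X y m n) $$ (i,c) * X $$ (j,c)) = (Wt X y m (Suc n)) $$ (i,j)"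
proof -
  have "(\<Sum>c<r. (Wt X y m n) $$ (i,c) * X $$ (j,c)) = (\<Sum>c<r. (Wt X y m n) $$ (i,c) * (transpose_mat X) $$ (c,j))"
    using X ij by (intro sum.cong refl) auto
  also have "\<dots> = (Wt X y m n * transpose_mat X) $$ (i,j)"
    using X y ij Wt_carrier[OF X y] by (intro mult_entry[symmetric]) auto
  also have "Wt X y m n * transpose_mat X = Wt X y m (Suc n)"
  proof -
    have "Wt X y m n * transpose_mat X = (X ^\<^sub>m m * y) * (transpose_mat X ^\<^sub>m n * transpose_mat X)"
      unfolding Wt_def using X y by (intro assoc_mult_mat) auto
    then show ?thesis by (simp add: Wt_def)
  qed
  finally show ?thesis .
qed

lemma Z_rec:
  assumes X: "X \<in> carrier_mat r r" and y: "y \<in> carrier_mat r r" and ij: "i < r" "j < r"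
  shows "real (Suc N) * Zs X y (Suc N) i j
       = (\<Sum>c<r. X $$ (i,c) * Zs X y N c j) + (\<Sum>c<r. Zs X y N i c * X $$ (j,c))"
proof -
  have r1: "(\<Sum>c<r. X $$ (i,c) * Zs X y N c j) = (\<Sum>m\<le>N. (Wt X y (Suc m) (N-m)) $$ (i,j) / (fact m * fact (N-m)))"
  proof -
    have "(\<Sum>c<r. X $$ (i,c) * Zs X y N c j)
        = (\<Sum>c<r. \<Sum>m\<le>N. X $$ (i,c) * (Wt X y m (N-m)) $$ (c,j) / (fact m * fact (N-m)))"
      by (simp add: Zs_def sum_distrib_left)
    also have "\<dots> = (\<Sum>m\<le>N. \<Sum>c<r. X $$ (i,c) * (Wt X y m (N-m)) $$ (c,j) / (fact m * fact (N-m)))"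
      by (rule sum.swap)
    also have "\<dots> = (\<Sum>m\<le>N. (\<Sum>c<r. X $$ (i,c) * (Wt X y m (N-m)) $$ (c,j)) / (fact m * fact (N-m)))"
      by (simp add: sum_divide_distrib)
    also have "\<dots> = (\<Sum>m\<le>N. (Wt X y (Suc m) (N-m)) $$ (i,j) / (fact m * fact (N-m)))"
      using W_left[OF X y ij] by simp
    finally show ?thesis .
  qed
  have r2: "(\<Sum>c<r. Zs X y N i c * X $$ (j,c)) = (\<Sum>m\<le>N. (Wt X y m (Suc N - m)) $$ (i,j) / (fact m * fact (N-m)))"
  proof -
    have "(\<Sum>c<r. Zs X y N i c * X $$ (j,c))
        = (\<Sum>c<r. \<Sum>m\<le>N. (Wt X y m (N-m)) $$ (i,c) * X $$ (j,c) / (fact m * fact (N-m)))"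
      by (simp add: Zs_def sum_distrib_right)
    also have "\<dots> = (\<Sum>m\<le>N. \<Sum>c<r. (Wt X y m (N-m)) $$ (i,c) * X $$ (j,c) / (fact m * fact (N-m)))"
      by (rule sum.swap)
    also have "\<dots> = (\<Sum>m\<le>N. (\<Sum>c<r. (Wt X y m (N-m)) $$ (i,c) * X $$ (j,c)) / (fact m * fact (N-m)))"
      by (simp add: sum_divide_distrib)
    also have "\<dots> = (\<Sum>m\<le>N. (Wt X y m (Suc N - m)) $$ (i,j) / (fact m * fact (N-m)))"
    proof (intro sum.cong refl)
      fix m assume "m \<in> {..N}"
      then have e: "Suc N - m = Suc (N - m)" by auto
      show "(\<Sum>c<r. (Wt X y m (N-m)) $$ (i,c) * X $$ (j,c)) / (fact m * fact (N-m))
          = (Wt X y m (Suc N - m)) $$ (i,j) / (fact m * fact (N-m))"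
        unfolding e using W_right[OF X y ij] by simp
    qed
    finally show ?thesis .
  qed
  have "real (Suc N) * Zs X y (Suc N) i j
     = (\<Sum>m\<le>N. (Wt X y (Suc m) (N-m)) $$ (i,j) / (fact m * fact (N-m)))
     + (\<Sum>m\<le>N. (Wt X y m (Suc N - m)) $$ (i,j) / (fact m * fact (N-m)))"
    unfolding Zs_def using comb_rec[of N "\<lambda>m n. (Wt X y m n) $$ (i,j)"] by simp
  then show ?thesis using r1 r2 by simp
qed

lemma Z_sums:
  assumes X: "X \<in> carrier_mat r r" and y: "y \<in> carrier_mat r r" and ij: "i < r" "j < r"
  shows "(\<lambda>N. Zs X y N i j) sums ((mexp X * y * transpose_mat (mexp X)) $$ (i,j))"
  using mexp_prod[OF X y _ ij, of "transpose_mat X"] X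
  by (simp add: Zs_def Wt_def mexp_transpose[OF X])



definition rep :: "nat \<Rightarrow> real mat \<Rightarrow> (nat \<Rightarrow> real) \<Rightarrow> real \<Rightarrow> bool" where
  "rep r X \<gamma> \<mu> \<longleftrightarrow> X \<in> carrier_mat r r \<and>
     (\<forall>i<r. \<forall>j<r. X $$ (i,j) = (\<Sum>k<r. \<gamma> k * Tm r k $$ (i,j)) + (if i = j then \<mu> else 0))"

definition gL :: "nat \<Rightarrow> real \<Rightarrow> real \<Rightarrow> (nat \<Rightarrow> real) \<Rightarrow> real mat" where
  "gL r a b c = mat r r (\<lambda>(i,j). a * H1 r $$ (i,j) + b * H2 r $$ (i,j)
                     + (\<Sum>k\<in>{1..<r}. c k * Tm r k $$ (i,j)))"

lemma gLie_gL: "X \<in> gLie r \<longleftrightarrow> (\<exists>a b c. X = gL r a b c)"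
  unfolding gLie_def gL_def by auto

lemma gL_carrier[simp]: "gL r a b c \<in> carrier_mat r r"
  unfolding gL_def carrier_mat_def by simp

lemma sum_lessThan_split0:
  fixes f :: "nat \<Rightarrow> real"
  assumes "r \<ge> 1"
  shows "(\<Sum>k<r. f k) = f 0 + (\<Sum>k\<in>{1..<r}. f k)"
proof -
  have "{..<r} = insert 0 {1..<r}" using assms by auto
  then show ?thesis by simp
qed

lemma Tm_entry: "i < r \<Longrightarrow> j < r \<Longrightarrow> Tm r k $$ (i,j) = (if j = i + k then real r - real k - real i else 0)"
  unfolding Tm_def by simp

lemma gL_rep:
  assumes "r \<ge> 1"
  shows "rep r (gL r a b c) (\<lambda>k. if k = 0 then (a-b)/real r else c k) (b - a/2)"
  unfolding rep_def
proof (intro conjI allI impI)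
  fix i j assume ij: "i < r" "j < r"
  have sp: "(\<Sum>k<r. (if k = 0 then (a-b)/real r else c k) * Tm r k $$ (i,j))
     = (a-b)/real r * Tm r 0 $$ (i,j) + (\<Sum>k\<in>{1..<r}. c k * Tm r k $$ (i,j))"
    by (subst sum_lessThan_split0[OF assms]) (auto intro!: sum.cong)
  show "gL r a b c $$ (i,j) = (\<Sum>k<r. (if k = 0 then (a-b)/real r else c k) * Tm r k $$ (i,j))
        + (if i = j then b - a/2 else 0)"
    unfolding sp using ij by (simp add: gL_def H1_def H2_def field_simps)
qed simp

definition Lop :: "nat \<Rightarrow> (nat \<Rightarrow> real) \<Rightarrow> real \<Rightarrow> (nat \<Rightarrow> real) \<Rightarrow> nat \<Rightarrow> real" where
  "Lop r \<gamma> \<mu> d s = (\<Sum>k<r. \<gamma> k * (if s + k \<le> r + 1 then (2 * real r - 2 * real k - real s + 1) * d (s + k) else 0))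
     + 2 * \<mu> * d s"

lemma sh_entry: "i < r \<Longrightarrow> j < r \<Longrightarrow> sh r d $$ (i,j) = (if i + j \<le> r then d (i + j + 1) else 0)"
  unfolding sh_def by simp

lemma sh_carrier[simp]: "sh r d \<in> carrier_mat r r"
  unfolding sh_def carrier_mat_def by simp

lemma sum_delta_mult:
  fixes w :: "nat \<Rightarrow> real"
  shows "(\<Sum>c<r. (if c = p then v else 0) * w c) = (if p < r then v * w p else 0)"
proof -
  have "(\<Sum>c<r. (if c = p then v else 0) * w c) = (\<Sum>c<r. if c = p then v * w c else 0)"
    by (intro sum.cong) auto
  then show ?thesis by (simp add: sum.delta')
qed

lemma Tk_left:
  fixes z :: "real mat"
  assumes "i < r"
  shows "(\<Sum>c<r. Tm r k $$ (i,c) * z $$ (c,j)) = (if i + k < r then (real r - real k - real i) * z $$ (i+k, j) else 0)"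
proof -
  have "(\<Sum>c<r. Tm r k $$ (i,c) * z $$ (c,j)) = (\<Sum>c<r. (if c = i + k then real r - real k - real i else 0) * z $$ (c,j))"
    using assms by (intro sum.cong) (auto simp: Tm_entry)
  then show ?thesis by (simp add: sum_delta_mult)
qed

lemma Tk_right:
  fixes z :: "real mat"
  assumes "j < r"
  shows "(\<Sum>c<r. z $$ (i,c) * Tm r k $$ (j,c)) = (if j + k < r then (real r - real k - real j) * z $$ (i, j+k) else 0)"
proof -
  have "(\<Sum>c<r. z $$ (i,c) * Tm r k $$ (j,c)) = (\<Sum>c<r. (if c = j + k then real r - real k - real j else 0) * z $$ (i,c))"
    using assms by (intro sum.cong) (auto simp: Tm_entry)
  then show ?thesis by (simp add: sum_delta_mult)
qed

lemma pair_k: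
  assumes ij: "i < r" "j < r"
  shows "(if i + k < r then (real r - real k - real i) * sh r d $$ (i+k, j) else 0)
       + (if j + k < r then (real r - real k - real j) * sh r d $$ (i, j+k) else 0)
       = (if i + j \<le> r then (if (i+j+1) + k \<le> r + 1 then (2 * real r - 2 * real k - real (i+j+1) + 1) * d ((i+j+1) + k) else 0) else 0)"
proof (cases "i + j + k \<le> r")
  case True
  have e1: "(if i + k < r then (real r - real k - real i) * sh r d $$ (i+k, j) else 0)
      = (real r - real k - real i) * d (i+j+1+k)"
  proof (cases "i + k < r")
    case True
    then show ?thesis using \<open>i+j+k \<le> r\<close> ij by (simp add: sh_entry ac_simps)
  next
    case False
    then have "i + k = r" using \<open>i+j+k \<le> r\<close> by auto
    then have "real r - real k - real i = 0" by linarith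
    then show ?thesis using False by simp
  qed
  have e2: "(if j + k < r then (real r - real k - real j) * sh r d $$ (i, j+k) else 0)
      = (real r - real k - real j) * d (i+j+1+k)"
  proof (cases "j + k < r")
    case True
    then show ?thesis using \<open>i+j+k \<le> r\<close> ij by (simp add: sh_entry ac_simps)
  next
    case False
    then have "j + k = r" using \<open>i+j+k \<le> r\<close> by auto
    then have "real r - real k - real j = 0" by linarith
    then show ?thesis using False by simp
  qed
  show ?thesis unfolding e1 e2 using True by (simp add: algebra_simps)
next
  case False
  then show ?thesis using ij by (auto simp: sh_entry)
qed

lemma Lsh:
  assumes X: "rep r X \<gamma> \<mu>" and ij: "i < r" "j < r"
  shows "(\<Sum>c<r. X $$ (i,c) * sh r d $$ (c,j)) + (\<Sum>c<r. sh r d $$ (i,c) * X $$ (j,c))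
       = sh r (Lop r \<gamma> \<mu> d) $$ (i,j)"
proof -
  let ?z = "sh r d"
  have Xe: "\<And>p q. p < r \<Longrightarrow> q < r \<Longrightarrow> X $$ (p,q) = (\<Sum>k<r. \<gamma> k * Tm r k $$ (p,q)) + (if p = q then \<mu> else 0)"
    using X unfolding rep_def by auto
  have l1: "(\<Sum>c<r. X $$ (i,c) * ?z $$ (c,j))
      = (\<Sum>k<r. \<gamma> k * (\<Sum>c<r. Tm r k $$ (i,c) * ?z $$ (c,j))) + \<mu> * ?z $$ (i,j)"
  proof -
    have "(\<Sum>c<r. X $$ (i,c) * ?z $$ (c,j))
        = (\<Sum>c<r. (\<Sum>k<r. \<gamma> k * (Tm r k $$ (i,c) * ?z $$ (c,j))) + (if c = i then \<mu> * ?z $$ (c,j) else 0))"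
      using ij by (intro sum.cong refl) (auto simp: Xe sum_distrib_left sum_distrib_right mult_ac distrib_right distrib_left)
    also have "\<dots> = (\<Sum>c<r. \<Sum>k<r. \<gamma> k * (Tm r k $$ (i,c) * ?z $$ (c,j))) + \<mu> * ?z $$ (i,j)"
      using ij by (simp add: sum.distrib sum.delta')
    also have "(\<Sum>c<r. \<Sum>k<r. \<gamma> k * (Tm r k $$ (i,c) * ?z $$ (c,j)))
        = (\<Sum>k<r. \<gamma> k * (\<Sum>c<r. Tm r k $$ (i,c) * ?z $$ (c,j)))"
      by (subst sum.swap) (simp add: sum_distrib_left)
    finally show ?thesis .
  qed
  have l2: "(\<Sum>c<r. ?z $$ (i,c) * X $$ (j,c))
      = (\<Sum>k<r. \<gamma> k * (\<Sum>c<r. ?z $$ (i,c) * Tm r k $$ (j,c))) + \<mu> * ?z $$ (i,j)"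
  proof -
    have "(\<Sum>c<r. ?z $$ (i,c) * X $$ (j,c))
        = (\<Sum>c<r. (\<Sum>k<r. \<gamma> k * (?z $$ (i,c) * Tm r k $$ (j,c))) + (if c = j then \<mu> * ?z $$ (i,c) else 0))"
      using ij by (intro sum.cong refl) (auto simp: Xe sum_distrib_left sum_distrib_right mult_ac distrib_right distrib_left)
    also have "\<dots> = (\<Sum>c<r. \<Sum>k<r. \<gamma> k * (?z $$ (i,c) * Tm r k $$ (j,c))) + \<mu> * ?z $$ (i,j)"
      using ij by (simp add: sum.distrib sum.delta')
    also have "(\<Sum>c<r. \<Sum>k<r. \<gamma> k * (?z $$ (i,c) * Tm r k $$ (j,c)))
        = (\<Sum>k<r. \<gamma> k * (\<Sum>c<r. ?z $$ (i,c) * Tm r k $$ (j,c)))"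
      by (subst sum.swap) (simp add: sum_distrib_left)
    finally show ?thesis .
  qed
  have "(\<Sum>c<r. X $$ (i,c) * ?z $$ (c,j)) + (\<Sum>c<r. ?z $$ (i,c) * X $$ (j,c))
      = (\<Sum>k<r. \<gamma> k * ((if i + k < r then (real r - real k - real i) * ?z $$ (i+k, j) else 0)
       + (if j + k < r then (real r - real k - real j) * ?z $$ (i, j+k) else 0))) + 2 * \<mu> * ?z $$ (i,j)"
    unfolding l1 l2 Tk_left[OF ij(1)] Tk_right[OF ij(2)]
    by (simp add: algebra_simps sum.distrib)
  also have "\<dots> = (\<Sum>k<r. \<gamma> k * (if i + j \<le> r then (if (i+j+1) + k \<le> r + 1 then (2 * real r - 2 * real k - real (i+j+1) + 1) * d ((i+j+1) + k) else 0) else 0))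
       + 2 * \<mu> * ?z $$ (i,j)"
    using pair_k[OF ij] by simp
  also have "\<dots> = sh r (Lop r \<gamma> \<mu> d) $$ (i,j)"
  proof (cases "i + j \<le> r")
    case True
    have "sh r (Lop r \<gamma> \<mu> d) $$ (i,j) = Lop r \<gamma> \<mu> d (i+j+1)"
      using True ij by (simp only: sh_entry if_True)
    moreover have "?z $$ (i,j) = d (i+j+1)" using True ij by (simp only: sh_entry if_True)
    ultimately show ?thesis using True by (simp only: Lop_def if_True)
  next
    case False
    then show ?thesis using ij by (simp add: sh_entry)
  qed
  finally show ?thesis .
qed



fun dser :: "nat \<Rightarrow> (nat \<Rightarrow> real) \<Rightarrow> real \<Rightarrow> (nat \<Rightarrow> real) \<Rightarrow> nat \<Rightarrow> nat \<Rightarrow> real" where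
  "dser r \<gamma> \<mu> d 0 = d"
| "dser r \<gamma> \<mu> d (Suc N) = (\<lambda>s. Lop r \<gamma> \<mu> (dser r \<gamma> \<mu> d N) s / real (Suc N))"

lemma Z_sh:
  assumes X: "rep r X \<gamma> \<mu>" and ij: "i < r" "j < r"
  shows "Zs X (sh r d) N i j = sh r (dser r \<gamma> \<mu> d N) $$ (i,j)"
  using ij
proof (induction N arbitrary: i j)
  case 0
  have Xc: "X \<in> carrier_mat r r" using X rep_def by auto
  have "Wt X (sh r d) 0 0 = sh r d" unfolding Wt_def using Xc
    by (simp add: left_mult_one_mat[of _ r r] right_mult_one_mat[of _ r r])
  then show ?case by (simp add: Zs_def)
next
  case (Suc N)
  have Xc: "X \<in> carrier_mat r r" using X rep_def by auto
  have "real (Suc N) * Zs X (sh r d) (Suc N) i j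
      = (\<Sum>c<r. X $$ (i,c) * Zs X (sh r d) N c j) + (\<Sum>c<r. Zs X (sh r d) N i c * X $$ (j,c))"
    by (rule Z_rec[OF Xc sh_carrier Suc.prems])
  also have "\<dots> = (\<Sum>c<r. X $$ (i,c) * sh r (dser r \<gamma> \<mu> d N) $$ (c,j))
                + (\<Sum>c<r. sh r (dser r \<gamma> \<mu> d N) $$ (i,c) * X $$ (j,c))"
    using Suc by simp
  also have "\<dots> = sh r (Lop r \<gamma> \<mu> (dser r \<gamma> \<mu> d N)) $$ (i,j)"
    by (rule Lsh[OF X Suc.prems])
  finally have "Zs X (sh r d) (Suc N) i j = sh r (Lop r \<gamma> \<mu> (dser r \<gamma> \<mu> d N)) $$ (i,j) / real (Suc N)"
    by (simp add: field_simps del: of_nat_Suc)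
  then show ?case using Suc.prems by (simp add: sh_entry del: of_nat_Suc)
qed

definition rhoc :: "real mat \<Rightarrow> real mat \<Rightarrow> real mat" where "rhoc g y = rho g y"

lemma act_sums:
  assumes X: "rep r X \<gamma> \<mu>" and ij: "i < r" "j < r"
  shows "(\<lambda>N. sh r (dser r \<gamma> \<mu> d N) $$ (i,j)) sums (rho (mexp X) (sh r d) $$ (i,j))"
proof -
  have Xc: "X \<in> carrier_mat r r" using X rep_def by auto
  show ?thesis using Z_sums[OF Xc sh_carrier ij, of d] Z_sh[OF X ij] by (simp add: rho_def)
qed

lemma rho_carrier[simp]: "g \<in> carrier_mat r r \<Longrightarrow> y \<in> carrier_mat r r \<Longrightarrow> rho g y \<in> carrier_mat r r"
  unfolding rho_def by auto

lemma act_sh: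
  assumes X: "rep r X \<gamma> \<mu>"
    and e: "\<And>s. 1 \<le> s \<Longrightarrow> s \<le> r + 1 \<Longrightarrow> (\<lambda>N. dser r \<gamma> \<mu> d N s) sums (e s)"
  shows "rho (mexp X) (sh r d) = sh r e"
proof -
  have Xc: "X \<in> carrier_mat r r" using X rep_def by auto
  have c: "rho (mexp X) (sh r d) \<in> carrier_mat r r" using Xc by simp
  show ?thesis
  proof (rule eq_matI)
    fix i j assume "i < dim_row (sh r e)" "j < dim_col (sh r e)"
    then have ij: "i < r" "j < r" by (auto simp: sh_def)
    have s1: "(\<lambda>N. sh r (dser r \<gamma> \<mu> d N) $$ (i,j)) sums (rho (mexp X) (sh r d) $$ (i,j))"
      by (rule act_sums[OF X ij])
    show "rho (mexp X) (sh r d) $$ (i,j) = sh r e $$ (i,j)"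
    proof (cases "i + j \<le> r")
      case True
      have "(\<lambda>N. sh r (dser r \<gamma> \<mu> d N) $$ (i,j)) sums (sh r e $$ (i,j))"
        using e[of "i+j+1"] True ij by (simp add: sh_entry)
      then show ?thesis using s1 sums_unique2 by blast
    next
      case False
      have "(\<lambda>N. sh r (dser r \<gamma> \<mu> d N) $$ (i,j)) sums (sh r e $$ (i,j))"
        using False ij by (simp add: sh_entry)
      then show ?thesis using s1 sums_unique2 by blast
    qed
  qed (use c in \<open>auto simp: sh_def\<close>)
qed

lemma act_SH:
  assumes X: "rep r X \<gamma> \<mu>"
  shows "rho (mexp X) (sh r d) = sh r (\<lambda>s. \<Sum>N. dser r \<gamma> \<mu> d N s)"
proof -
  have Xc: "X \<in> carrier_mat r r" using X rep_def by auto
  have c: "rho (mexp X) (sh r d) \<in> carrier_mat r r" using Xc by simp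
  show ?thesis
  proof (rule eq_matI)
    fix i j assume "i < dim_row (sh r (\<lambda>s. \<Sum>N. dser r \<gamma> \<mu> d N s))" "j < dim_col (sh r (\<lambda>s. \<Sum>N. dser r \<gamma> \<mu> d N s))"
    then have ij: "i < r" "j < r" by (auto simp: sh_def)
    have s1: "(\<lambda>N. sh r (dser r \<gamma> \<mu> d N) $$ (i,j)) sums (rho (mexp X) (sh r d) $$ (i,j))"
      by (rule act_sums[OF X ij])
    show "rho (mexp X) (sh r d) $$ (i,j) = sh r (\<lambda>s. \<Sum>N. dser r \<gamma> \<mu> d N s) $$ (i,j)"
    proof (cases "i + j \<le> r")
      case True
      have "(\<lambda>N. sh r (dser r \<gamma> \<mu> d N) $$ (i,j)) = (\<lambda>N. dser r \<gamma> \<mu> d N (i+j+1))"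
        using True ij by (simp add: sh_entry)
      then have "(\<lambda>N. dser r \<gamma> \<mu> d N (i+j+1)) sums (rho (mexp X) (sh r d) $$ (i,j))"
        using s1 by simp
      then have "rho (mexp X) (sh r d) $$ (i,j) = (\<Sum>N. dser r \<gamma> \<mu> d N (i+j+1))"
        by (rule sums_unique)
      moreover have "sh r (\<lambda>s. \<Sum>N. dser r \<gamma> \<mu> d N s) $$ (i,j) = (\<Sum>N. dser r \<gamma> \<mu> d N (i+j+1))"
        using True ij by (simp only: sh_entry if_True)
      ultimately show ?thesis by simp
    next
      case False
      have "(\<lambda>N. sh r (dser r \<gamma> \<mu> d N) $$ (i,j)) sums 0"
        using False ij by (simp add: sh_entry)
      then have "rho (mexp X) (sh r d) $$ (i,j) = 0" using s1 sums_unique2 by blast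
      moreover have "sh r (\<lambda>s. \<Sum>N. dser r \<gamma> \<mu> d N s) $$ (i,j) = 0"
        using False ij by (simp only: sh_entry if_False)
      ultimately show ?thesis by simp
    qed
  qed (use c in \<open>auto simp: sh_def\<close>)
qed

lemma dser_top:
  assumes "r \<ge> 1"
  shows "dser r \<gamma> \<mu> d N (r+1) = (\<gamma> 0 * real r + 2 * \<mu>) ^ N / fact N * d (r+1)"
proof (induction N)
  case 0 then show ?case by simp
next
  case (Suc N)
  have L: "Lop r \<gamma> \<mu> f (r+1) = (\<gamma> 0 * real r + 2 * \<mu>) * f (r+1)" for f
  proof -
    have "(\<Sum>k<r. \<gamma> k * (if r + 1 + k \<le> r + 1 then (2 * real r - 2 * real k - real (r+1) + 1) * f (r + 1 + k) else 0))
        = (\<Sum>k<r. if k = 0 then \<gamma> 0 * real r * f (r+1) else 0)"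
      by (intro sum.cong refl) auto
    also have "\<dots> = \<gamma> 0 * real r * f (r+1)" using assms by (simp add: sum.delta)
    finally show ?thesis unfolding Lop_def by (simp add: algebra_simps)
  qed
  let ?k = "\<gamma> 0 * real r + 2 * \<mu>"
  have "dser r \<gamma> \<mu> d (Suc N) (r+1) = Lop r \<gamma> \<mu> (dser r \<gamma> \<mu> d N) (r+1) / real (Suc N)"
    by (simp only: dser.simps)
  also have "\<dots> = ?k * (?k ^ N / fact N * d (r+1)) / real (Suc N)"
    by (simp only: L Suc.IH)
  also have "\<dots> = ?k ^ Suc N / (real (Suc N) * fact N) * d (r+1)"
    by (simp only: power_Suc) (simp add: field_simps)
  also have "\<dots> = ?k ^ Suc N / fact (Suc N) * d (r+1)"
    by (simp only: fact_Suc)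
  finally show ?case .
qed

lemma P2_sh: "r \<ge> 2 \<Longrightarrow> P2 r (sh r d) = d (r+1)"
  unfolding P2_def by (simp add: sh_entry)

lemma rho_mult:
  assumes "A \<in> carrier_mat r r" "B \<in> carrier_mat r r" "y \<in> carrier_mat r r"
  shows "rho (A * B) y = rho A (rho B y)"
proof -
  have "rho (A * B) y = A * B * y * (transpose_mat B * transpose_mat A)"
    unfolding rho_def using assms by (simp add: transpose_mult[of _ r r _ r])
  also have "\<dots> = A * (B * y * transpose_mat B) * transpose_mat A"
    using assms by (simp add: assoc_mult_mat[of _ r r _ r _ r])
  finally show ?thesis unfolding rho_def .
qed

lemma rho_one: "y \<in> carrier_mat r r \<Longrightarrow> rho (1\<^sub>m r) y = y"
  unfolding rho_def by (simp add: left_mult_one_mat[of _ r r] right_mult_one_mat[of _ r r])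

lemma det_rho:
  assumes "g \<in> carrier_mat r r" "y \<in> carrier_mat r r"
  shows "det (rho g y) = det g * det g * det y"
  unfolding rho_def using assms by (simp add: det_mult[of _ r] det_transpose)



lemma gLie_rep:
  assumes "X \<in> gLie r" "r \<ge> 1"
  shows "\<exists>\<gamma> \<mu>. rep r X \<gamma> \<mu>"
proof -
  obtain a b c where "X = gL r a b c" using assms(1) gLie_gL by blast
  then show ?thesis using gL_rep[OF assms(2)] by blast
qed

lemma gLie_carrier: "X \<in> gLie r \<Longrightarrow> X \<in> carrier_mat r r"
  using gLie_gL[of X r] gL_carrier by auto

lemma Ggrp_carrier: "g \<in> Ggrp r \<Longrightarrow> g \<in> carrier_mat r r"
proof (induction rule: Ggrp.induct)
  case one then show ?case by simp
next
  case (step X A)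
  then have "mexp X \<in> carrier_mat r r" using gLie_carrier mexp_carrier by blast
  then show ?case using step by simp
qed

lemma Ggrp_mexp: "X \<in> gLie r \<Longrightarrow> mexp X \<in> Ggrp r"
  using Ggrp.step[OF _ Ggrp.one, of X r] gLie_carrier[of X r]
  by (simp add: right_mult_one_mat[of _ r r])

lemma Ggrp_mult: "g \<in> Ggrp r \<Longrightarrow> h \<in> Ggrp r \<Longrightarrow> g * h \<in> Ggrp r"
proof (induction rule: Ggrp.induct)
  case one then show ?case using Ggrp_carrier[of h r] by (simp add: left_mult_one_mat[of _ r r])
next
  case (step X A)
  have c: "mexp X \<in> carrier_mat r r" "A \<in> carrier_mat r r" "h \<in> carrier_mat r r"
    using step Ggrp_carrier gLie_carrier mexp_carrier by blast+
  have "mexp X * A * h = mexp X * (A * h)" using c by (rule assoc_mult_mat)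
  then show ?case using step Ggrp.step by simp
qed

lemma neg_gLie: "X \<in> gLie r \<Longrightarrow> (-1) \<cdot>\<^sub>m X \<in> gLie r"
proof -
  assume "X \<in> gLie r"
  then obtain a b c where X: "X = gL r a b c" using gLie_gL by blast
  have "(-1) \<cdot>\<^sub>m X = gL r (-a) (-b) (\<lambda>k. - c k)"
    unfolding X gL_def by (rule eq_matI) (auto simp: sum_negf[symmetric] algebra_simps)
  then show ?thesis using gLie_gL by blast
qed

lemma Ggrp_inv: "g \<in> Ggrp r \<Longrightarrow> \<exists>h\<in>Ggrp r. h * g = 1\<^sub>m r"
proof (induction rule: Ggrp.induct)
  case one then show ?case using Ggrp.one by (intro bexI[of _ "1\<^sub>m r"]) auto
next
  case (step X A)
  then obtain h where h: "h \<in> Ggrp r" "h * A = 1\<^sub>m r" by blast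
  have Xc: "X \<in> carrier_mat r r" using step gLie_carrier by blast
  have c: "h \<in> carrier_mat r r" "A \<in> carrier_mat r r" "mexp X \<in> carrier_mat r r"
    "mexp ((-1) \<cdot>\<^sub>m X) \<in> carrier_mat r r"
    using step h Ggrp_carrier Xc by auto
  have m: "mexp ((-1) \<cdot>\<^sub>m X) \<in> Ggrp r" using Ggrp_mexp neg_gLie step by blast
  have "(h * mexp ((-1) \<cdot>\<^sub>m X)) * (mexp X * A) = h * ((mexp ((-1) \<cdot>\<^sub>m X) * mexp X) * A)"
    using c by (simp add: assoc_mult_mat[of _ r r _ r _ r])
  also have "\<dots> = h * A" using mexp_inv[OF Xc] c by (simp add: left_mult_one_mat[of _ r r])
  finally have "(h * mexp ((-1) \<cdot>\<^sub>m X)) * (mexp X * A) = 1\<^sub>m r" using h by simp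
  moreover have "h * mexp ((-1) \<cdot>\<^sub>m X) \<in> Ggrp r" using Ggrp_mult h m by blast
  ultimately show ?case by blast
qed

lemma Ggrp_det: "g \<in> Ggrp r \<Longrightarrow> det g \<noteq> 0"
proof -
  assume g: "g \<in> Ggrp r"
  then obtain h where h: "h \<in> Ggrp r" "h * g = 1\<^sub>m r" using Ggrp_inv by blast
  have "det h * det g = 1" using det_mult[of h r g] h g Ggrp_carrier by (metis det_one)
  then show ?thesis by auto
qed

lemma exp_series_top:
  "(\<lambda>N. x ^ N / fact N * c) sums (exp x * (c::real))"
  using sums_mult2[OF exp_converges[of x], of c] by (simp add: divide_inverse mult_ac)

lemma mexp_act_top:
  assumes "r \<ge> 2" "X \<in> gLie r"
  shows "\<exists>e \<kappa>. \<kappa> > 0 \<and> rho (mexp X) (sh r d) = sh r e \<and> e (r+1) = \<kappa> * d (r+1)"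
proof -
  obtain \<gamma> \<mu> where X: "rep r X \<gamma> \<mu>" using gLie_rep assms by fastforce
  define e where "e = (\<lambda>s. \<Sum>N. dser r \<gamma> \<mu> d N s)"
  have "(\<lambda>N. dser r \<gamma> \<mu> d N (r+1)) sums (exp (\<gamma> 0 * real r + 2 * \<mu>) * d (r+1))"
    using exp_series_top dser_top assms by simp
  then have "e (r+1) = exp (\<gamma> 0 * real r + 2 * \<mu>) * d (r+1)" unfolding e_def by (rule sums_unique[symmetric])
  moreover have "rho (mexp X) (sh r d) = sh r e" unfolding e_def by (rule act_SH[OF X])
  ultimately show ?thesis by (intro exI[of _ e] exI[of _ "exp (\<gamma> 0 * real r + 2 * \<mu>)"]) auto
qed

lemma Ggrp_act:
  assumes "r \<ge> 2"
  shows "g \<in> Ggrp r \<Longrightarrow> \<exists>e \<kappa>. \<kappa> > 0 \<and> rho g (sh r d) = sh r e \<and> e (r+1) = \<kappa> * d (r+1)"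
proof (induction arbitrary: d rule: Ggrp.induct)
  case one
  show ?case by (intro exI[of _ d] exI[of _ 1]) (simp add: rho_one)
next
  case (step X A)
  obtain e \<kappa> where e: "\<kappa> > 0" "rho A (sh r d) = sh r e" "e (r+1) = \<kappa> * d (r+1)" using step by blast
  obtain e' \<kappa>' where e': "\<kappa>' > 0" "rho (mexp X) (sh r e) = sh r e'" "e' (r+1) = \<kappa>' * e (r+1)"
    using mexp_act_top[OF assms step(1)] by blast
  have c: "mexp X \<in> carrier_mat r r" "A \<in> carrier_mat r r"
    using step Ggrp_carrier gLie_carrier mexp_carrier by blast+
  have "rho (mexp X * A) (sh r d) = sh r e'" using rho_mult[OF c sh_carrier] e e' by simp
  moreover have "e' (r+1) = (\<kappa>' * \<kappa>) * d (r+1)" using e e' by simp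
  ultimately show ?case using e e' by (intro exI[of _ e'] exI[of _ "\<kappa>' * \<kappa>"]) auto
qed

lemma SH_iff: "y \<in> SH r \<longleftrightarrow> (\<exists>d. y = sh r d)"
  unfolding SH_def by auto

lemma orbit_props:
  assumes r: "r \<ge> 2" and y: "y \<in> SH r" and g: "g \<in> Ggrp r"
  shows "rho g y \<in> SH r" "\<exists>\<kappa>>0. P2 r (rho g y) = \<kappa> * P2 r y"
    "\<exists>\<kappa>>0. P1 (rho g y) = \<kappa> * P1 y"
proof -
  obtain d where d: "y = sh r d" using y SH_iff by blast
  obtain e \<kappa> where e: "\<kappa> > 0" "rho g (sh r d) = sh r e" "e (r+1) = \<kappa> * d (r+1)"
    using Ggrp_act[OF r g] by blast
  show "rho g y \<in> SH r" using e d SH_iff by auto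
  show "\<exists>\<kappa>>0. P2 r (rho g y) = \<kappa> * P2 r y" using e d P2_sh r by auto
  have gc: "g \<in> carrier_mat r r" using g Ggrp_carrier by blast
  have "P1 (rho g y) = (det g * det g) * P1 y"
    unfolding P1_def d using det_rho[OF gc sh_carrier] by simp
  moreover have "det g * det g > 0" using Ggrp_det[OF g] by (auto simp: zero_less_mult_iff linorder_neq_iff)
  ultimately show "\<exists>\<kappa>>0. P1 (rho g y) = \<kappa> * P1 y" by blast
qed



definition Xu :: "nat \<Rightarrow> nat \<Rightarrow> real \<Rightarrow> real mat" where
  "Xu r k t = gL r 0 0 (\<lambda>k'. if k' = k then t else 0)"

lemma Xu_gLie: "Xu r k t \<in> gLie r" unfolding Xu_def gLie_gL by blast

lemma Xu_rep:
  assumes "1 \<le> k" "k < r"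
  shows "rep r (Xu r k t) (\<lambda>k'. if k' = k then t else 0) 0"
proof -
  have "rep r (Xu r k t) (\<lambda>k'. if k' = 0 then (0-0)/real r else (if k' = k then t else 0)) (0 - 0/2)"
    unfolding Xu_def by (rule gL_rep) (use assms in auto)
  moreover have "(\<lambda>k'. if k' = 0 then (0-0)/real r else (if k' = k then t else (0::real))) = (\<lambda>k'. if k' = k then t else 0)"
    using assms by auto
  ultimately show ?thesis by simp
qed

lemma Lop_unip:
  assumes "k < r"
  shows "Lop r (\<lambda>k'. if k' = k then t else 0) 0 d s
       = t * (if s + k \<le> r + 1 then (2 * real r - 2 * real k - real s + 1) * d (s + k) else 0)"
proof -
  have "(\<Sum>k'<r. (if k' = k then t else 0) * (if s + k' \<le> r + 1 then (2 * real r - 2 * real k' - real s + 1) * d (s + k') else 0))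
      = (\<Sum>k'<r. if k' = k then t * (if s + k \<le> r + 1 then (2 * real r - 2 * real k - real s + 1) * d (s + k) else 0) else 0)"
    by (intro sum.cong) auto
  also have "\<dots> = t * (if s + k \<le> r + 1 then (2 * real r - 2 * real k - real s + 1) * d (s + k) else 0)"
    using assms by (simp add: sum.delta)
  finally show ?thesis unfolding Lop_def by simp
qed

lemma U1:
  assumes "k < r" "s + k > r + 1"
  shows "dser r (\<lambda>k'. if k' = k then t else 0) 0 d (Suc N) s = 0"
  using assms by (simp add: Lop_unip)

lemma U2:
  assumes "k < r" "s + k > r + 1"
  shows "(\<lambda>N. dser r (\<lambda>k'. if k' = k then t else 0) 0 d N s) sums d s"
proof -
  have "(\<lambda>N. dser r (\<lambda>k'. if k' = k then t else 0) 0 d N s) = (\<lambda>N. if N = 0 then d s else 0)"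
  proof
    fix N show "dser r (\<lambda>k'. if k' = k then t else 0) 0 d N s = (if N = 0 then d s else 0)"
      using U1[OF assms] by (cases N) auto
  qed
  then show ?thesis using sums_single[of 0 "\<lambda>_. d s"] by simp
qed

lemma U3:
  assumes "1 \<le> k" "k < r" "s + k = r + 1"
  shows "(\<lambda>N. dser r (\<lambda>k'. if k' = k then t else 0) 0 d N s) sums (d s + t * (real r - real k) * d (r+1))"
proof -
  let ?f = "\<lambda>N. dser r (\<lambda>k'. if k' = k then t else 0) 0 d N s"
  have f0: "?f 0 = d s" by simp
  have f1: "?f 1 = t * (real r - real k) * d (r+1)"
  proof -
    have "real s + real k = real r + 1" using arg_cong[OF assms(3), of real] by simp
    then have c: "2 * real r - 2 * real k - real s + 1 = real r - real k" by linarith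
    show ?thesis using assms by (simp add: Lop_unip c)
  qed
  have fz: "?f N = 0" if "N \<notin> {0,1}" for N
  proof -
    have "N \<ge> 2" using that by auto
    then obtain M where M: "N = Suc (Suc M)" by (metis add_2_eq_Suc le_Suc_ex)
    have "dser r (\<lambda>k'. if k' = k then t else 0) 0 d (Suc M) (s + k) = 0"
      using U1[of k r "s+k"] assms by simp
    then show ?thesis unfolding M using assms by (simp add: Lop_unip)
  qed
  have "?f sums (\<Sum>N\<in>{0,1}. ?f N)" by (rule sums_finite) (use fz in auto)
  then show ?thesis using f0 f1 by simp
qed

definition Xt :: "nat \<Rightarrow> real \<Rightarrow> real \<Rightarrow> real mat" where
  "Xt r a b = gL r a b (\<lambda>_. 0)"

lemma Xt_gLie: "Xt r a b \<in> gLie r" unfolding Xt_def gLie_gL by blast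

definition kap :: "nat \<Rightarrow> real \<Rightarrow> real \<Rightarrow> nat \<Rightarrow> real" where
  "kap r a b s = (a - b) / real r * (2 * real r - real s + 1) + 2 * (b - a/2)"

lemma Lop_tor:
  assumes "r \<ge> 1" "s \<le> r + 1"
  shows "Lop r (\<lambda>k. if k = 0 then (a-b)/real r else 0) (b - a/2) d s = kap r a b s * d s"
proof -
  have "(\<Sum>k<r. (if k = 0 then (a-b)/real r else 0) * (if s + k \<le> r + 1 then (2 * real r - 2 * real k - real s + 1) * d (s + k) else 0))
      = (\<Sum>k<r. if k = 0 then (a-b)/real r * ((2 * real r - real s + 1) * d s) else 0)"
    using assms by (intro sum.cong) auto
  also have "\<dots> = (a-b)/real r * ((2 * real r - real s + 1) * d s)" using assms by (simp add: sum.delta)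
  finally show ?thesis unfolding Lop_def kap_def by (simp add: algebra_simps)
qed

lemma dser_tor:
  assumes "r \<ge> 1" "s \<le> r + 1"
  shows "dser r (\<lambda>k. if k = 0 then (a-b)/real r else 0) (b - a/2) d N s = kap r a b s ^ N / fact N * d s"
proof (induction N)
  case 0 then show ?case by simp
next
  case (Suc N)
  let ?k = "kap r a b s"
  have "dser r (\<lambda>k. if k = 0 then (a-b)/real r else 0) (b - a/2) d (Suc N) s
     = Lop r (\<lambda>k. if k = 0 then (a-b)/real r else 0) (b - a/2) (dser r (\<lambda>k. if k = 0 then (a-b)/real r else 0) (b - a/2) d N) s / real (Suc N)"
    by (simp only: dser.simps)
  also have "\<dots> = ?k * (?k ^ N / fact N * d s) / real (Suc N)"
    by (simp only: Lop_tor[OF assms] Suc.IH)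
  also have "\<dots> = ?k ^ Suc N / (real (Suc N) * fact N) * d s"
    by (simp only: power_Suc) (simp add: field_simps)
  also have "\<dots> = ?k ^ Suc N / fact (Suc N) * d s"
    by (simp only: fact_Suc)
  finally show ?case .
qed

lemma tor_act:
  assumes "r \<ge> 1"
  shows "rho (mexp (Xt r a b)) (sh r d) = sh r (\<lambda>s. exp (kap r a b s) * d s)"
proof (rule act_sh)
  show "rep r (Xt r a b) (\<lambda>k. if k = 0 then (a-b)/real r else 0) (b - a/2)"
  proof -
    have "rep r (Xt r a b) (\<lambda>k. if k = 0 then (a-b)/real r else (\<lambda>_. 0) k) (b - a/2)"
      unfolding Xt_def by (rule gL_rep[OF assms])
    then show ?thesis by simp
  qed
  fix s assume "1 \<le> s" "s \<le> r + 1"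
  then show "(\<lambda>N. dser r (\<lambda>k. if k = 0 then (a-b)/real r else 0) (b - a/2) d N s) sums (exp (kap r a b s) * d s)"
    using exp_series_top dser_tor assms by simp
qed

lemma kap1: "r \<ge> 1 \<Longrightarrow> kap r a b 1 = a"
  unfolding kap_def by (simp add: field_simps)

lemma kapr: "r \<ge> 1 \<Longrightarrow> kap r a b (r+1) = b"
  unfolding kap_def by (simp add: field_simps)



lemma kill:
  assumes r: "r \<ge> 2" and d: "d (r+1) \<noteq> 0"
  shows "m \<le> r - 1 \<Longrightarrow> \<exists>g\<in>Ggrp r. \<exists>e. rho g (sh r d) = sh r e \<and> e (r+1) = d (r+1)
            \<and> (\<forall>s. r + 1 - m \<le> s \<and> s \<le> r \<longrightarrow> e s = 0)"
proof (induction m)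
  case 0
  show ?case using Ggrp.one by (intro bexI[of _ "1\<^sub>m r"] exI[of _ d]) (auto simp: rho_one)
next
  case (Suc m)
  then obtain g e where g: "g \<in> Ggrp r" "rho g (sh r d) = sh r e" "e (r+1) = d (r+1)"
      "\<forall>s. r + 1 - m \<le> s \<and> s \<le> r \<longrightarrow> e s = 0" by auto
  define k where "k = Suc m"
  have k: "1 \<le> k" "k < r" using Suc.prems r unfolding k_def by auto
  define t where "t = - e (r+1-k) / ((real r - real k) * e (r+1))"
  let ?\<gamma> = "\<lambda>k'. if k' = k then t else (0::real)"
  have X: "rep r (Xu r k t) ?\<gamma> 0" by (rule Xu_rep[OF k])
  define e' where "e' = (\<lambda>s. \<Sum>N. dser r ?\<gamma> 0 e N s)"
  have act: "rho (mexp (Xu r k t)) (sh r e) = sh r e'" unfolding e'_def by (rule act_SH[OF X])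
  have gg: "mexp (Xu r k t) * g \<in> Ggrp r" using Ggrp.step[OF Xu_gLie g(1)] .
  have c: "mexp (Xu r k t) \<in> carrier_mat r r" "g \<in> carrier_mat r r"
    using Xu_gLie gLie_carrier mexp_carrier g Ggrp_carrier by blast+
  have rg: "rho (mexp (Xu r k t) * g) (sh r d) = sh r e'"
    using rho_mult[OF c sh_carrier] g act by simp
  have top: "e' (r+1) = e (r+1)"
    using U2[of k r "r+1" t e] k unfolding e'_def by (simp add: sums_iff)
  have zero: "e' s = 0" if s: "r + 1 - Suc m \<le> s" "s \<le> r" for s
  proof (cases "s = r + 1 - k")
    case True
    then have "(\<lambda>N. dser r ?\<gamma> 0 e N s) sums (e s + t * (real r - real k) * e (r+1))"
      using U3[OF k] k by simp
    then have "e' s = e s + t * (real r - real k) * e (r+1)" unfolding e'_def by (simp add: sums_iff)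
    also have "\<dots> = 0"
    proof -
      have "(real r - real k) * e (r+1) \<noteq> 0" using k g(3) d by simp
      then show ?thesis unfolding t_def True by (simp add: field_simps)
    qed
    finally show ?thesis .
  next
    case False
    then have sk: "s + k > r + 1" using s k unfolding k_def by auto
    have "e' s = e s" using U2[OF k(2) sk] unfolding e'_def by (simp add: sums_iff)
    also have "e s = 0" using g(4) s False k unfolding k_def by auto
    finally show ?thesis .
  qed
  show ?case
    by (rule bexI[OF _ gg], rule exI[of _ e']) (use rg top g(3) zero in auto)
qed

definition nf :: "nat \<Rightarrow> real \<Rightarrow> real \<Rightarrow> real mat" where
  "nf r a b = sh r (\<lambda>s. if s = 1 then a else if s = r + 1 then b else 0)"

lemma sh_cong:
  assumes "\<And>s. 1 \<le> s \<Longrightarrow> s \<le> r + 1 \<Longrightarrow> f s = g s"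
  shows "sh r f = sh r g"
  unfolding sh_def by (rule eq_matI) (auto simp: assms)

lemma nf_SH: "nf r a b \<in> SH r" unfolding nf_def SH_def by blast

lemma nf_multrow:
  assumes "r \<ge> 2"
  shows "nf r a b = multrow 0 a (nf r 1 b)"
proof (rule eq_matI)
  fix i j assume "i < dim_row (multrow 0 a (nf r 1 b))" "j < dim_col (multrow 0 a (nf r 1 b))"
  then have ij: "i < r" "j < r" by (auto simp: nf_def sh_def mat_multrow_def)
  have "multrow 0 a (nf r 1 b) $$ (i,j) = (if i = 0 then a * nf r 1 b $$ (i,j) else nf r 1 b $$ (i,j))"
    using ij by (simp add: mat_multrow_def nf_def sh_def)
  then show "nf r a b $$ (i,j) = multrow 0 a (nf r 1 b) $$ (i,j)"
    using ij assms by (simp add: nf_def sh_entry)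
qed (auto simp: nf_def sh_def mat_multrow_def)

lemma det_nf:
  assumes "r \<ge> 2"
  shows "det (nf r a b) = a * det (nf r 1 b)"
proof -
  have c: "nf r 1 b \<in> carrier_mat r r" unfolding nf_def by (rule sh_carrier)
  have "det (nf r a b) = det (multrow 0 a (nf r 1 b))" by (subst nf_multrow[OF assms]) (rule refl)
  also have "\<dots> = a * det (nf r 1 b)" by (rule det_multrow[OF _ c]) (use assms in simp)
  finally show ?thesis .
qed

lemma sgn_exp: "(x::real) \<noteq> 0 \<Longrightarrow> exp (- ln \<bar>x\<bar>) * x = sgn x"
  by (simp add: exp_minus field_simps sgn_real_def)

lemma normal_form:
  assumes r: "r \<ge> 2" and y: "y \<in> SH r" and p1: "P1 y \<noteq> 0" and p2: "P2 r y \<noteq> 0"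
  shows "\<exists>g\<in>Ggrp r. \<exists>\<epsilon>. (\<epsilon> = 1 \<or> \<epsilon> = -1) \<and> rho g y = nf r \<epsilon> (sgn (P2 r y))"
proof -
  obtain d where yd: "y = sh r d" using y SH_iff by blast
  have d: "d (r+1) \<noteq> 0" using p2 P2_sh[OF r] yd by simp
  obtain g e where g: "g \<in> Ggrp r" "rho g (sh r d) = sh r e" "e (r+1) = d (r+1)"
      "\<forall>s. r + 1 - (r - 1) \<le> s \<and> s \<le> r \<longrightarrow> e s = 0"
    using kill[of r d "r-1", OF r d] by auto
  have enf: "sh r e = nf r (e 1) (e (r+1))"
    unfolding nf_def by (rule sh_cong) (use g(4) r in auto)
  have gc: "g \<in> carrier_mat r r" using g Ggrp_carrier by blast
  have "det (sh r e) = det g * det g * det y" using det_rho[OF gc sh_carrier, of d] g(2) yd by metis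
  then have dete: "det (sh r e) \<noteq> 0" using Ggrp_det[OF g(1)] p1 by (simp add: P1_def)
  have e1: "e 1 \<noteq> 0"
  proof
    assume "e 1 = 0"
    then have "det (sh r e) = 0" using enf det_nf[OF r, of 0] by simp
    then show False using dete by simp
  qed
  define a where "a = - ln \<bar>e 1\<bar>"
  define b where "b = - ln \<bar>e (r+1)\<bar>"
  have t: "rho (mexp (Xt r a b)) (sh r e) = sh r (\<lambda>s. exp (kap r a b s) * e s)"
    by (rule tor_act) (use r in simp)
  have "sh r (\<lambda>s. exp (kap r a b s) * e s) = nf r (sgn (e 1)) (sgn (e (r+1)))"
    unfolding nf_def
  proof (rule sh_cong)
    fix s assume s: "1 \<le> s" "s \<le> r + 1"
    show "exp (kap r a b s) * e s = (if s = 1 then sgn (e 1) else if s = r + 1 then sgn (e (r+1)) else 0)"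
    proof (cases "s = 1")
      case True then show ?thesis using kap1[of r a b] r e1 sgn_exp[OF e1] by (simp add: a_def)
    next
      case False
      show ?thesis
      proof (cases "s = r + 1")
        case True then show ?thesis using kapr[of r a b] r False g(3) d sgn_exp[of "e (r+1)"]
          by (simp add: b_def)
      next
        case False2: False
        then show ?thesis using False g(4) s by auto
      qed
    qed
  qed
  moreover have c: "mexp (Xt r a b) \<in> carrier_mat r r" using Xt_gLie gLie_carrier mexp_carrier by blast
  ultimately have "rho (mexp (Xt r a b) * g) y = nf r (sgn (e 1)) (sgn (P2 r y))"
    using rho_mult[OF c gc sh_carrier] g t yd P2_sh[OF r] by simp
  moreover have "mexp (Xt r a b) * g \<in> Ggrp r" using Ggrp.step[OF Xt_gLie g(1)] .
  moreover have "sgn (e 1) = 1 \<or> sgn (e 1) = -1" using e1 by (simp add: sgn_real_def)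
  ultimately show ?thesis by blast
qed



lemma sign_aux:
  fixes k k' p q :: real
  assumes "k > 0" "k' > 0" "p * q > 0" "k * p = - (k' * q)"
  shows False
proof -
  have a: "k * (p * q) > 0" using assms by simp
  have "k * (p * q) = (k * p) * q" by (simp add: mult.assoc)
  also have "\<dots> = - (k' * (q * q))" using assms(4) by (simp add: mult.assoc)
  finally have b: "k * (p * q) = - (k' * (q * q))" .
  have "k' * (q * q) \<ge> 0" using assms(2) by simp
  then show False using a b by linarith
qed

lemma sgn_eq_if_prod_pos: "(a::real) * b > 0 \<Longrightarrow> sgn a = sgn b"
  by (auto simp: sgn_real_def zero_less_mult_iff)

lemma SH_carrier: "y \<in> SH r \<Longrightarrow> y \<in> carrier_mat r r"
  unfolding SH_def by auto

lemma orbit_eq: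
  assumes r: "r \<ge> 2" and y: "y \<in> SH r" and p1: "P1 y \<noteq> 0" and p2: "P2 r y \<noteq> 0"
  shows "orbit r y = {y'\<in>SH r. P1 y * P1 y' > 0 \<and> P2 r y * P2 r y' > 0}"
proof
  show "orbit r y \<subseteq> {y'\<in>SH r. P1 y * P1 y' > 0 \<and> P2 r y * P2 r y' > 0}"
  proof
    fix z assume "z \<in> orbit r y"
    then obtain g where g: "g \<in> Ggrp r" "z = rho g y" unfolding orbit_def by blast
    obtain k1 where k1: "k1 > 0" "P1 z = k1 * P1 y" using orbit_props(3)[OF r y g(1)] g by blast
    obtain k2 where k2: "k2 > 0" "P2 r z = k2 * P2 r y" using orbit_props(2)[OF r y g(1)] g by blast
    have a1: "P1 y * P1 z = k1 * (P1 y * P1 y)" using k1 by simp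
    have a2: "P1 y * P1 y > 0" using p1 by (auto simp: zero_less_mult_iff linorder_neq_iff)
    have q1: "P1 y * P1 z > 0" unfolding a1 using k1(1) a2 by (rule mult_pos_pos)
    have b1: "P2 r y * P2 r z = k2 * (P2 r y * P2 r y)" using k2 by simp
    have b2: "P2 r y * P2 r y > 0" using p2 by (auto simp: zero_less_mult_iff linorder_neq_iff)
    have q2: "P2 r y * P2 r z > 0" unfolding b1 using k2(1) b2 by (rule mult_pos_pos)
    show "z \<in> {y'\<in>SH r. P1 y * P1 y' > 0 \<and> P2 r y * P2 r y' > 0}"
      using orbit_props(1)[OF r y g(1)] g q1 q2 by simp
  qed
next
  show "{y'\<in>SH r. P1 y * P1 y' > 0 \<and> P2 r y * P2 r y' > 0} \<subseteq> orbit r y"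
  proof
    fix y' assume "y' \<in> {y'\<in>SH r. P1 y * P1 y' > 0 \<and> P2 r y * P2 r y' > 0}"
    then have y': "y' \<in> SH r" "P1 y * P1 y' > 0" "P2 r y * P2 r y' > 0" by auto
    have p1': "P1 y' \<noteq> 0" "P2 r y' \<noteq> 0" using y' by auto
    obtain g \<epsilon> where g: "g \<in> Ggrp r" "\<epsilon> = 1 \<or> \<epsilon> = -1" "rho g y = nf r \<epsilon> (sgn (P2 r y))"
      using normal_form[OF r y p1 p2] by blast
    obtain g' \<epsilon>' where g': "g' \<in> Ggrp r" "\<epsilon>' = 1 \<or> \<epsilon>' = -1" "rho g' y' = nf r \<epsilon>' (sgn (P2 r y'))"
      using normal_form[OF r y'(1) p1'] by blast
    have sg: "sgn (P2 r y') = sgn (P2 r y)" using sgn_eq_if_prod_pos[OF y'(3)] by simp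
    define D where "D = det (nf r 1 (sgn (P2 r y)))"
    obtain k1 where k1: "k1 > 0" "P1 (rho g y) = k1 * P1 y" using orbit_props(3)[OF r y g(1)] by blast
    obtain k1' where k1': "k1' > 0" "P1 (rho g' y') = k1' * P1 y'" using orbit_props(3)[OF r y'(1) g'(1)] by blast
    have e1: "\<epsilon> * D = k1 * P1 y" using k1 g(3) det_nf[OF r, of \<epsilon> "sgn (P2 r y)"] unfolding D_def P1_def by simp
    have e2: "\<epsilon>' * D = k1' * P1 y'" using k1' g'(3) det_nf[OF r, of \<epsilon>' "sgn (P2 r y)"] sg unfolding D_def P1_def by simp
    have ee: "\<epsilon>' = \<epsilon>"
    proof (rule ccontr)
      assume "\<epsilon>' \<noteq> \<epsilon>"
      then have "\<epsilon>' = - \<epsilon>" using g(2) g'(2) by auto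
      then have "k1 * P1 y = - (k1' * P1 y')" using e1 e2 by simp
      then show False using sign_aux[OF k1(1) k1'(1) y'(2)] by simp
    qed
    have nfe: "rho g y = rho g' y'" using g(3) g'(3) ee sg by simp
    obtain h where h: "h \<in> Ggrp r" "h * g' = 1\<^sub>m r" using Ggrp_inv[OF g'(1)] by blast
    have c: "h \<in> carrier_mat r r" "g \<in> carrier_mat r r" "g' \<in> carrier_mat r r"
      "y \<in> carrier_mat r r" "y' \<in> carrier_mat r r"
      using Ggrp_carrier[OF h(1)] Ggrp_carrier[OF g(1)] Ggrp_carrier[OF g'(1)]
        SH_carrier[OF y] SH_carrier[OF y'(1)] by auto
    have "rho (h * g) y = rho h (rho g y)" by (rule rho_mult[OF c(1,2,4)])
    also have "\<dots> = rho h (rho g' y')" using nfe by simp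
    also have "\<dots> = rho (h * g') y'" by (rule rho_mult[OF c(1,3,5), symmetric])
    also have "\<dots> = y'" using h(2) rho_one[OF c(5)] by simp
    finally have "rho (h * g) y = y'" .
    moreover have "h * g \<in> Ggrp r" using Ggrp_mult h g by blast
    ultimately show "y' \<in> orbit r y" unfolding orbit_def by blast
  qed
qed

definition pp :: "nat \<Rightarrow> nat \<Rightarrow> nat" where "pp r i = (if i = 0 then 0 else r - i)"

lemma nf11_entry:
  assumes "r \<ge> 2" "i < r" "c < r"
  shows "nf r 1 1 $$ (i,c) = (if c = pp r i then 1 else 0)"
  using assms by (auto simp: nf_def sh_entry pp_def)

lemma pp_lt: "r \<ge> 2 \<Longrightarrow> i < r \<Longrightarrow> pp r i < r" unfolding pp_def by auto

lemma pp_pp: "r \<ge> 2 \<Longrightarrow> i < r \<Longrightarrow> pp r (pp r i) = i" unfolding pp_def by auto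

lemma nf_sq:
  assumes r: "r \<ge> 2"
  shows "nf r 1 1 * nf r 1 1 = 1\<^sub>m r"
proof (rule eq_matI)
  fix i j assume "i < dim_row (1\<^sub>m r)" "j < dim_col (1\<^sub>m r)"
  then have ij: "i < r" "j < r" by auto
  have c: "nf r 1 1 \<in> carrier_mat r r" unfolding nf_def by (rule sh_carrier)
  have "(nf r 1 1 * nf r 1 1) $$ (i,j) = (\<Sum>c<r. nf r 1 1 $$ (i,c) * nf r 1 1 $$ (c,j))"
    by (rule mult_entry[OF c c ij])
  also have "\<dots> = (\<Sum>c<r. (if c = pp r i then 1 else 0) * nf r 1 1 $$ (c,j))"
    using r ij by (intro sum.cong refl) (simp add: nf11_entry)
  also have "\<dots> = nf r 1 1 $$ (pp r i, j)"
    using pp_lt[OF r ij(1)] by (simp add: sum_delta_mult)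
  also have "\<dots> = (if j = i then 1 else 0)"
    using nf11_entry[OF r pp_lt[OF r ij(1)] ij(2)] pp_pp[OF r ij(1)] by auto
  finally show "(nf r 1 1 * nf r 1 1) $$ (i,j) = 1\<^sub>m r $$ (i,j)" using ij by simp
qed (auto simp: nf_def sh_def)

lemma det_nf11:
  assumes r: "r \<ge> 2"
  shows "det (nf r 1 1) \<noteq> 0"
proof -
  have c: "nf r 1 1 \<in> carrier_mat r r" unfolding nf_def by (rule sh_carrier)
  have "det (nf r 1 1) * det (nf r 1 1) = det (nf r 1 1 * nf r 1 1)"
    by (rule det_mult[OF c c, symmetric])
  also have "\<dots> = 1" using nf_sq[OF r] by simp
  finally show ?thesis by auto
qed



lemma entry_conv:
  fixes f :: "nat \<Rightarrow> real" and c :: real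
  assumes "\<And>n. \<bar>f n - c\<bar> < inverse (real (Suc n))"
  shows "f \<longlonglongrightarrow> c"
proof (rule tendsto_sandwich[of "\<lambda>n. c - inverse (real (Suc n))" f sequentially "\<lambda>n. c + inverse (real (Suc n))"])
  show "\<forall>\<^sub>F n in sequentially. c - inverse (real (Suc n)) \<le> f n"
    using assms by (intro always_eventually allI) (smt (verit) assms)
  show "\<forall>\<^sub>F n in sequentially. f n \<le> c + inverse (real (Suc n))"
    using assms by (intro always_eventually allI) (smt (verit) assms)
  show "(\<lambda>n. c - inverse (real (Suc n))) \<longlonglongrightarrow> c"
    using tendsto_diff[OF tendsto_const LIMSEQ_inverse_real_of_nat, of c] by simp
  show "(\<lambda>n. c + inverse (real (Suc n))) \<longlonglongrightarrow> c"
    using tendsto_add[OF tendsto_const LIMSEQ_inverse_real_of_nat, of c] by simp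
qed

lemma det_conv:
  fixes f :: "nat \<Rightarrow> real mat"
  assumes fc: "\<And>n. f n \<in> carrier_mat r r" and zc: "z \<in> carrier_mat r r"
    and conv: "\<And>i j. i < r \<Longrightarrow> j < r \<Longrightarrow> (\<lambda>n. f n $$ (i,j)) \<longlonglongrightarrow> z $$ (i,j)"
  shows "(\<lambda>n. det (f n)) \<longlonglongrightarrow> det z"
proof -
  have "(\<lambda>n. \<Sum>p\<in>{p. p permutes {0..<r}}. signof p * (\<Prod>i=0..<r. f n $$ (i, p i)))
     \<longlonglongrightarrow> (\<Sum>p\<in>{p. p permutes {0..<r}}. signof p * (\<Prod>i=0..<r. z $$ (i, p i)))"
  proof (intro tendsto_sum tendsto_mult tendsto_const tendsto_prod)
    fix p i assume "p \<in> {p. p permutes {0..<r}}" "i \<in> {0..<r}"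
    then have "i < r" "p i < r" using permutes_in_image by fastforce+
    then show "(\<lambda>n. f n $$ (i, p i)) \<longlonglongrightarrow> z $$ (i, p i)" by (rule conv)
  qed
  then show ?thesis using det_def'[OF fc] det_def'[OF zc] by simp
qed

lemma open_S:
  assumes r: "r \<ge> 2"
  shows "open_SH r {y'\<in>SH r. P1 y * P1 y' > 0 \<and> P2 r y * P2 r y' > 0}"
  unfolding open_SH_def
proof (intro conjI ballI)
  show "{y'\<in>SH r. P1 y * P1 y' > 0 \<and> P2 r y * P2 r y' > 0} \<subseteq> SH r" by auto
  fix z assume z: "z \<in> {y'\<in>SH r. P1 y * P1 y' > 0 \<and> P2 r y * P2 r y' > 0}"
  show "\<exists>e>0. \<forall>y'\<in>SH r. (\<forall>i<r. \<forall>j<r. \<bar>y' $$ (i,j) - z $$ (i,j)\<bar> < e)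
           \<longrightarrow> y' \<in> {y'\<in>SH r. P1 y * P1 y' > 0 \<and> P2 r y * P2 r y' > 0}"
  proof (rule ccontr)
    assume na: "\<not> ?thesis"
    have "\<forall>n. \<exists>y'. y' \<in> SH r \<and> (\<forall>i<r. \<forall>j<r. \<bar>y' $$ (i,j) - z $$ (i,j)\<bar> < inverse (real (Suc n)))
        \<and> \<not> (P1 y * P1 y' > 0 \<and> P2 r y * P2 r y' > 0)"
    proof
      fix n
      have "inverse (real (Suc n)) > 0" by simp
      then show "\<exists>y'. y' \<in> SH r \<and> (\<forall>i<r. \<forall>j<r. \<bar>y' $$ (i,j) - z $$ (i,j)\<bar> < inverse (real (Suc n)))
        \<and> \<not> (P1 y * P1 y' > 0 \<and> P2 r y * P2 r y' > 0)"
        using na by blast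
    qed
    then obtain f where f: "\<And>n. f n \<in> SH r"
      "\<And>n i j. i < r \<Longrightarrow> j < r \<Longrightarrow> \<bar>f n $$ (i,j) - z $$ (i,j)\<bar> < inverse (real (Suc n))"
      "\<And>n. \<not> (P1 y * P1 (f n) > 0 \<and> P2 r y * P2 r (f n) > 0)"
      by metis
    have zS: "z \<in> SH r" "P1 y * P1 z > 0" "P2 r y * P2 r z > 0" using z by auto
    have conv: "(\<lambda>n. f n $$ (i,j)) \<longlonglongrightarrow> z $$ (i,j)" if "i < r" "j < r" for i j
      using f(2)[OF that] by (rule entry_conv)
    have dc: "(\<lambda>n. P1 (f n)) \<longlonglongrightarrow> P1 z"
      unfolding P1_def by (rule det_conv[OF SH_carrier[OF f(1)] SH_carrier[OF zS(1)] conv])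
    have pc: "(\<lambda>n. P2 r (f n)) \<longlonglongrightarrow> P2 r z"
      unfolding P2_def by (rule conv) (use r in auto)
    have e1: "\<forall>\<^sub>F n in sequentially. P1 y * P1 (f n) > 0"
      by (rule order_tendstoD(1)[OF tendsto_mult[OF tendsto_const dc] zS(2)])
    have e2: "\<forall>\<^sub>F n in sequentially. P2 r y * P2 r (f n) > 0"
      by (rule order_tendstoD(1)[OF tendsto_mult[OF tendsto_const pc] zS(3)])
    from eventually_conj[OF e1 e2] obtain N where "\<forall>n\<ge>N. P1 y * P1 (f n) > 0 \<and> P2 r y * P2 r (f n) > 0"
      unfolding eventually_sequentially by blast
    then show False using f(3)[of N] by auto
  qed
qed



lemma perturb:
  assumes r: "r \<ge> 2" and z: "z \<in> SH r" and e: "e > 0"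
  shows "\<exists>z'\<in>SH r. (\<forall>i<r. \<forall>j<r. \<bar>z' $$ (i,j) - z $$ (i,j)\<bar> < e) \<and> P1 z' * P2 r z' \<noteq> 0"
proof -
  obtain d where zd: "z = sh r d" using z SH_iff by blast
  define n0 where "n0 = nf r 1 1"
  have n0c: "n0 \<in> carrier_mat r r" unfolding n0_def nf_def by (rule sh_carrier)
  have zc: "z \<in> carrier_mat r r" using zd by simp
  define A where "A = (-1) \<cdot>\<^sub>m (n0 * z)"
  have Ac: "A \<in> carrier_mat r r" unfolding A_def using n0c zc by simp
  define p where "p = char_poly A"
  have pnz: "p \<noteq> 0"
  proof
    assume "p = 0"
    then have "coeff p r = 0" by simp
    then show False using degree_monic_char_poly[OF Ac] unfolding p_def by simp
  qed
  have evalp: "poly p t = det (n0 * z + t \<cdot>\<^sub>m 1\<^sub>m r)" for t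
  proof -
    have "poly p t = det (- (char_matrix A t))" unfolding p_def by (rule char_poly_matrix[OF Ac])
    also have "- (char_matrix A t) = n0 * z + t \<cdot>\<^sub>m 1\<^sub>m r"
      unfolding char_matrix_def A_def using n0c zc by (intro eq_matI) auto
    finally show ?thesis .
  qed
  have zt: "z + t \<cdot>\<^sub>m n0 = n0 * (n0 * z + t \<cdot>\<^sub>m 1\<^sub>m r)" for t
  proof -
    have "n0 * (n0 * z + t \<cdot>\<^sub>m 1\<^sub>m r) = n0 * (n0 * z) + n0 * (t \<cdot>\<^sub>m 1\<^sub>m r)"
      using n0c zc by (intro mult_add_distrib_mat) auto
    also have "n0 * (n0 * z) = (n0 * n0) * z" using n0c zc by (intro assoc_mult_mat[symmetric]) auto
    also have "n0 * n0 = 1\<^sub>m r" unfolding n0_def by (rule nf_sq[OF r])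
    also have "n0 * (t \<cdot>\<^sub>m 1\<^sub>m r) = t \<cdot>\<^sub>m n0"
      using n0c by (simp add: mult_smult_distrib[of _ r r _ r] right_mult_one_mat[of _ r r])
    finally show ?thesis using zc by (simp add: left_mult_one_mat[of _ r r])
  qed
  have detzt: "det (z + t \<cdot>\<^sub>m n0) = det n0 * poly p t" for t
    unfolding zt evalp using n0c zc by (intro det_mult) auto
  define B where "B = {t. poly p t = 0} \<union> {- d (r+1)}"
  have fB: "finite B" unfolding B_def using poly_roots_finite[OF pnz] by simp
  have "infinite ({0<..<e} - B)" using Diff_infinite_finite[OF fB] e by simp
  then obtain t where t: "t \<in> {0<..<e}" "t \<notin> B" by (metis Diff_iff finite.emptyI infinite_imp_nonempty ex_in_conv)
  define z' where "z' = z + t \<cdot>\<^sub>m n0"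
  have z'sh: "z' = sh r (\<lambda>s. d s + t * (if s = 1 then 1 else if s = r + 1 then 1 else 0))"
    unfolding z'_def zd n0_def nf_def by (rule eq_matI) (auto simp: sh_entry sh_def)
  have "z' \<in> SH r" unfolding z'sh SH_def by blast
  moreover have "P2 r z' \<noteq> 0"
  proof -
    have "P2 r z' = d (r+1) + t" unfolding z'sh using r by (simp add: P2_sh)
    then show ?thesis using t unfolding B_def by auto
  qed
  moreover have "P1 z' \<noteq> 0"
  proof -
    have "P1 z' = det n0 * poly p t" unfolding P1_def z'_def by (rule detzt)
    moreover have "det n0 \<noteq> 0" unfolding n0_def by (rule det_nf11[OF r])
    moreover have "poly p t \<noteq> 0" using t unfolding B_def by auto
    ultimately show ?thesis by simp
  qed
  moreover have "\<forall>i<r. \<forall>j<r. \<bar>z' $$ (i,j) - z $$ (i,j)\<bar> < e"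
  proof (intro allI impI)
    fix i j assume ij: "i < r" "j < r"
    have "z' $$ (i,j) - z $$ (i,j) = t * n0 $$ (i,j)" unfolding z'_def using ij n0c zc by simp
    moreover have "n0 $$ (i,j) = 0 \<or> n0 $$ (i,j) = 1" unfolding n0_def using nf11_entry[OF r ij] by simp
    ultimately show "\<bar>z' $$ (i,j) - z $$ (i,j)\<bar> < e" using t by auto
  qed
  ultimately show ?thesis by auto
qed

lemma orbit_refl: "y \<in> SH r \<Longrightarrow> y \<in> orbit r y"
  unfolding orbit_def using Ggrp.one rho_one[OF SH_carrier] by (metis image_eqI)

lemma orbit_zero:
  assumes r: "r \<ge> 2" and y: "y \<in> SH r" and z: "z \<in> orbit r y" and p: "P1 y * P2 r y = 0"
  shows "P1 z * P2 r z = 0"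
proof -
  obtain g where g: "g \<in> Ggrp r" "z = rho g y" using z unfolding orbit_def by blast
  obtain k1 where k1: "P1 z = k1 * P1 y" using orbit_props(3)[OF r y g(1)] g by blast
  obtain k2 where k2: "P2 r z = k2 * P2 r y" using orbit_props(2)[OF r y g(1)] g by blast
  show ?thesis using p k1 k2 by auto
qed

theorem proposition1:
  fixes r :: nat
  assumes "r \<ge> 2"
  shows "(\<forall>y\<in>SH r. P1 y \<noteq> 0 \<and> P2 r y \<noteq> 0 \<longrightarrow>
            orbit r y = {y'\<in>SH r. P1 y * P1 y' > 0 \<and> P2 r y * P2 r y' > 0})
       \<and> (\<exists>y\<in>SH r. open_SH r (orbit r y))
       \<and> SH r - \<Union>{orbit r y | y. y \<in> SH r \<and> open_SH r (orbit r y)}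
           = {y\<in>SH r. P1 y * P2 r y = 0}"
proof (intro conjI)
  have r: "r \<ge> 2" using assms .
  show A: "\<forall>y\<in>SH r. P1 y \<noteq> 0 \<and> P2 r y \<noteq> 0 \<longrightarrow>
            orbit r y = {y'\<in>SH r. P1 y * P1 y' > 0 \<and> P2 r y * P2 r y' > 0}"
    using orbit_eq[OF r] by blast
  have openorb: "open_SH r (orbit r y)" if "y \<in> SH r" "P1 y * P2 r y \<noteq> 0" for y
    using orbit_eq[OF r that(1)] that(2) open_S[OF r, of y] by simp
  show "\<exists>y\<in>SH r. open_SH r (orbit r y)"
  proof (intro bexI[of _ "nf r 1 1"] openorb)
    show "nf r 1 1 \<in> SH r" by (rule nf_SH)
    have "P2 r (nf r 1 1) = 1" unfolding nf_def using r by (simp add: P2_sh)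
    then show "P1 (nf r 1 1) * P2 r (nf r 1 1) \<noteq> 0" using det_nf11[OF r] by (simp add: P1_def)
  qed (rule nf_SH)
  show "SH r - \<Union>{orbit r y | y. y \<in> SH r \<and> open_SH r (orbit r y)} = {y\<in>SH r. P1 y * P2 r y = 0}"
  proof
    show "SH r - \<Union>{orbit r y | y. y \<in> SH r \<and> open_SH r (orbit r y)} \<subseteq> {y\<in>SH r. P1 y * P2 r y = 0}"
    proof
      fix y assume y: "y \<in> SH r - \<Union>{orbit r y | y. y \<in> SH r \<and> open_SH r (orbit r y)}"
      have yS: "y \<in> SH r" using y by auto
      have "P1 y * P2 r y = 0"
      proof (rule ccontr)
        assume "P1 y * P2 r y \<noteq> 0"
        then have "open_SH r (orbit r y)" using openorb yS by blast
        then have "y \<in> \<Union>{orbit r y | y. y \<in> SH r \<and> open_SH r (orbit r y)}"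
          using orbit_refl[OF yS] yS by blast
        then show False using y by blast
      qed
      then show "y \<in> {y\<in>SH r. P1 y * P2 r y = 0}" using yS by simp
    qed
  next
    show "{y\<in>SH r. P1 y * P2 r y = 0} \<subseteq> SH r - \<Union>{orbit r y | y. y \<in> SH r \<and> open_SH r (orbit r y)}"
    proof
      fix y assume y: "y \<in> {y\<in>SH r. P1 y * P2 r y = 0}"
      have yS: "y \<in> SH r" and yz: "P1 y * P2 r y = 0" using y by auto
      have "y \<notin> orbit r y0" if y0: "y0 \<in> SH r" "open_SH r (orbit r y0)" for y0
      proof
        assume yo: "y \<in> orbit r y0"
        show False
        proof (cases "P1 y0 * P2 r y0 = 0")
          case False
          then have "orbit r y0 = {y'\<in>SH r. P1 y0 * P1 y' > 0 \<and> P2 r y0 * P2 r y' > 0}"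
            using A y0 by simp
          then have "P1 y0 * P1 y > 0" "P2 r y0 * P2 r y > 0" using yo by auto
          then show False using yz by auto
        next
          case True
          have "y0 \<in> orbit r y0" by (rule orbit_refl[OF y0(1)])
          then obtain e where e: "e > 0" "\<forall>y'\<in>SH r. (\<forall>i<r. \<forall>j<r. \<bar>y' $$ (i,j) - y0 $$ (i,j)\<bar> < e) \<longrightarrow> y' \<in> orbit r y0"
            using y0(2) unfolding open_SH_def by blast
          obtain z' where z': "z' \<in> SH r" "\<forall>i<r. \<forall>j<r. \<bar>z' $$ (i,j) - y0 $$ (i,j)\<bar> < e" "P1 z' * P2 r z' \<noteq> 0"
            using perturb[OF r y0(1) e(1)] by blast
          have "z' \<in> orbit r y0" using e(2) z' by blast
          then have "P1 z' * P2 r z' = 0" using orbit_zero[OF r y0(1) _ True] by blast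
          then show False using z' by simp
        qed
      qed
      then show "y \<in> SH r - \<Union>{orbit r y | y. y \<in> SH r \<and> open_SH r (orbit r y)}" using yS by blast
    qed
  qed
qed


end
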